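(* For every $d,k,N\in\mathbb{N}$ (positive integers), the barycenter map $\mathsf{bary}:\mathcal{G}_{d,k}^N\to\mathcal{G}_{d,k}$ is an epimorphism (surjective morphism) of real affine algebraic varieties. Moreover, if $N-1$ of the $N$ sample elements are fixed arbitrarily, then the resulting map $\mathcal{G}_{d,k}\to\mathcal{G}_{d,k}$ (in the remaining sample element) is an isomorphism of algebraic varieties.
   Context: Let $T_{d,k}=\bigoplus_{\ell=0}^k(\mathbb{R}^d)^{\otimes \ell}$ be the truncated tensor algebra; write its elements as $\mathbf{z}=\mathbf{z}^{(0)}\oplus\cdots\oplus\mathbf{z}^{(k)}$ with $\mathbf{z}^{(\ell)}\in(\mathbb{R}^d)^{\otimes\ell}$. The product is the bilinear extension of $(\mathbf{a}\otimes\mathbf{b})_{i_1\dots i_{\ell+n}}=\mathbf{a}_{i_1\dots i_\ell}\mathbf{b}_{i_{\ell+1}\dots i_{\ell+n}}$ for $\mathbf{a}\in(\mathbb{R}^d)^{\otimes\ell},\mathbf{b}\in(\mathbb{R}^d)^{\otimes n}$ when $\ell+n\le k$, and $0$ when $\ell+n>k$; the unit is $1\in(\mathbb{R}^d)^{\otimes 0}=\mathbb{R}$. Let $\mathfrak{g}_{d,k}$ be the smallest Lie subalgebra of $T_{d,k}$ (bracket $[\mathbf{y},\mathbf{z}]=\mathbf{y}\otimes\mathbf{z}-\mathbf{z}\otimes\mathbf{y}$) containing the standard basis vectors $e_1,\dots,e_d\in\mathbb{R}^d$ (in level $1$). Let $\exp(\mathbf{z})=\sum_{\ell=0}^k\frac{1}{\ell!}\mathbf{z}^{\otimes\ell}$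 and $\mathcal{G}_{d,k}=\exp(\mathfrak{g}_{d,k})$, a group under the product of $T_{d,k}$ (the free nilpotent Lie group); $\exp:\mathfrak{g}_{d,k}\to\mathcal{G}_{d,k}$ is bijective with inverse $\log(\mathbf{s})=\sum_{\ell\ge1}\frac{(-1)^{\ell+1}}{\ell}(\mathbf{s}-1)^{\otimes\ell}$ (a finite sum). $\mathfrak{g}_{d,k}$ and $\mathcal{G}_{d,k}$ are regarded as real affine algebraic subvarieties of $T_{d,k}\cong\mathbb{R}^{(d^{k+1}-1)/(d-1)}$. For a sample $\mathbf{x}=(\mathbf{x}_1,\dots,\mathbf{x}_N)\in\mathcal{G}_{d,k}^N$, its barycenter $\mathsf{bary}(\mathbf{x})$ is the unique $\mathbf{m}\in\mathcal{G}_{d,k}$ satisfying $\sum_{i=1}^N\log(\mathbf{m}^{-1}\cdot\mathbf{x}_i)=0$ (existence and uniqueness are known). *)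

theory Defs
  imports Main "HOL-Library.FuncSet" Complex_Main
begin

text \<open>Elements of the truncated tensor algebra T_{d,k} are represented as coefficient
  functions on words: z w is the coefficient of e_{w_1} \<otimes> ... \<otimes> e_{w_l}.
  The ambient coordinates of T_{d,k} are the words over {0..<d} of length at most k.\<close>

type_synonym tensor = "nat list \<Rightarrow> real"

definition tensors :: "nat \<Rightarrow> nat \<Rightarrow> tensor set" where
  "tensors d k = {z. \<forall>w. z w \<noteq> 0 \<longrightarrow> length w \<le> k \<and> set w \<subseteq> {..<d}}"

definition tzero :: tensor where "tzero = (\<lambda>w. 0)"
definition tone :: tensor where "tone = (\<lambda>w. if w = [] then 1 else 0)"
definition tadd :: "tensor \<Rightarrow> tensor \<Rightarrow> tensor" where "tadd a b = (\<lambda>w. a w + b w)"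
definition tsub :: "tensor \<Rightarrow> tensor \<Rightarrow> tensor" where "tsub a b = (\<lambda>w. a w - b w)"
definition tscale :: "real \<Rightarrow> tensor \<Rightarrow> tensor" where "tscale c a = (\<lambda>w. c * a w)"

definition tmul :: "nat \<Rightarrow> tensor \<Rightarrow> tensor \<Rightarrow> tensor" where
  "tmul k a b = (\<lambda>w. if length w \<le> k
                      then (\<Sum>i\<le>length w. a (take i w) * b (drop i w)) else 0)"

primrec tpow :: "nat \<Rightarrow> tensor \<Rightarrow> nat \<Rightarrow> tensor" where
  "tpow k z 0 = tone"
| "tpow k z (Suc n) = tmul k z (tpow k z n)"

definition texp :: "nat \<Rightarrow> tensor \<Rightarrow> tensor" where
  "texp k z = (\<lambda>w. \<Sum>l\<le>k. (1 / fact l) * tpow k z l w)"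

definition tlog :: "nat \<Rightarrow> tensor \<Rightarrow> tensor" where
  "tlog k s = (\<lambda>w. \<Sum>l\<in>{1..k}. ((-1) ^ (l + 1) / real l) * tpow k (tsub s tone) l w)"

text \<open>Group inverse (Neumann series, exact for elements with scalar part 1).\<close>
definition tinv :: "nat \<Rightarrow> tensor \<Rightarrow> tensor" where
  "tinv k m = (\<lambda>w. \<Sum>l\<le>k. tpow k (tsub tone m) l w)"

definition tbracket :: "nat \<Rightarrow> tensor \<Rightarrow> tensor \<Rightarrow> tensor" where
  "tbracket k y z = tsub (tmul k y z) (tmul k z y)"

definition basis_vec :: "nat \<Rightarrow> tensor" where
  "basis_vec i = (\<lambda>w. if w = [i] then 1 else 0)"

inductive_set lie_alg :: "nat \<Rightarrow> nat \<Rightarrow> tensor set" for d k where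
  gen: "i < d \<Longrightarrow> basis_vec i \<in> lie_alg d k"
| zero: "tzero \<in> lie_alg d k"
| add: "a \<in> lie_alg d k \<Longrightarrow> b \<in> lie_alg d k \<Longrightarrow> tadd a b \<in> lie_alg d k"
| scale: "a \<in> lie_alg d k \<Longrightarrow> tscale c a \<in> lie_alg d k"
| bracket: "a \<in> lie_alg d k \<Longrightarrow> b \<in> lie_alg d k \<Longrightarrow> tbracket k a b \<in> lie_alg d k"

definition grp :: "nat \<Rightarrow> nat \<Rightarrow> tensor set" where
  "grp d k = texp k ` lie_alg d k"

text \<open>Samples of size N: coordinates (i,w), i < N the sample index; unused coordinates are 0.\<close>
definition sample_comp :: "(nat \<times> nat list \<Rightarrow> real) \<Rightarrow> nat \<Rightarrow> tensor" where
  "sample_comp x i = (\<lambda>w. x (i, w))"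

definition samples :: "nat \<Rightarrow> nat \<Rightarrow> nat \<Rightarrow> (nat \<times> nat list \<Rightarrow> real) set" where
  "samples d k N = {x. (\<forall>i<N. sample_comp x i \<in> grp d k) \<and> (\<forall>i w. N \<le> i \<longrightarrow> x (i, w) = 0)}"

definition sample_upd :: "(nat \<times> nat list \<Rightarrow> real) \<Rightarrow> nat \<Rightarrow> tensor \<Rightarrow> (nat \<times> nat list \<Rightarrow> real)" where
  "sample_upd x i y = (\<lambda>(j, w). if j = i then y w else x (j, w))"

definition bary :: "nat \<Rightarrow> nat \<Rightarrow> nat \<Rightarrow> (nat \<times> nat list \<Rightarrow> real) \<Rightarrow> tensor" where
  "bary d k N x = (THE m. m \<in> grp d k \<and>
      (\<lambda>w. \<Sum>i<N. tlog k (tmul k (tinv k m) (sample_comp x i)) w) = tzero)"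

inductive_set polyfun :: "(('v \<Rightarrow> real) \<Rightarrow> real) set" where
  const: "(\<lambda>x. c) \<in> polyfun"
| var: "(\<lambda>x. x v) \<in> polyfun"
| add: "p \<in> polyfun \<Longrightarrow> q \<in> polyfun \<Longrightarrow> (\<lambda>x. p x + q x) \<in> polyfun"
| mult: "p \<in> polyfun \<Longrightarrow> q \<in> polyfun \<Longrightarrow> (\<lambda>x. p x * q x) \<in> polyfun"

definition alg_morphism :: "('a \<Rightarrow> real) set \<Rightarrow> ('b \<Rightarrow> real) set \<Rightarrow> (('a \<Rightarrow> real) \<Rightarrow> ('b \<Rightarrow> real)) \<Rightarrow> bool" where
  "alg_morphism V W f \<longleftrightarrow> (\<forall>x\<in>V. f x \<in> W) \<and> (\<forall>b. \<exists>p\<in>polyfun. \<forall>x\<in>V. f x b = p x)"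

definition alg_iso :: "('a \<Rightarrow> real) set \<Rightarrow> ('b \<Rightarrow> real) set \<Rightarrow> (('a \<Rightarrow> real) \<Rightarrow> ('b \<Rightarrow> real)) \<Rightarrow> bool" where
  "alg_iso V W f \<longleftrightarrow> alg_morphism V W f \<and>
     (\<exists>g. alg_morphism W V g \<and> (\<forall>x\<in>V. g (f x) = x) \<and> (\<forall>y\<in>W. f (g y) = y))"

end

theory Submission
  imports Defs "HOL-Computational_Algebra.Formal_Power_Series" "HOL-Computational_Algebra.Polynomial"
begin

definition tclean :: "nat \<Rightarrow> tensor \<Rightarrow> bool" where
  "tclean k z \<longleftrightarrow> (\<forall>w. k < length w \<longrightarrow> z w = 0)"

definition lo :: "nat \<Rightarrow> tensor \<Rightarrow> bool" where
  "lo n z \<longleftrightarrow> (\<forall>w. length w < n \<longrightarrow> z w = 0)"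

definition trunc :: "nat \<Rightarrow> tensor \<Rightarrow> tensor" where
  "trunc k z = (\<lambda>w. if length w \<le> k then z w else 0)"

lemma tmul_le: "length w \<le> k \<Longrightarrow> tmul k a b w = (\<Sum>i\<le>length w. a (take i w) * b (drop i w))"
  by (simp add: tmul_def)

lemma tmul_gt: "k < length w \<Longrightarrow> tmul k a b w = 0"
  by (simp add: tmul_def)

lemma tclean_tmul[simp]: "tclean k (tmul k a b)"
  by (simp add: tclean_def tmul_def)

lemma tclean_tone[simp]: "tclean k tone"
  by (simp add: tclean_def tone_def)

lemma tclean_tpow[simp]: "tclean k (tpow k z n)"
  by (cases n) auto

lemma trunc_clean[simp]: "tclean k z \<Longrightarrow> trunc k z = z"
  by (auto simp: trunc_def tclean_def fun_eq_iff)

lemma tmul_assoc: "tmul k (tmul k a b) c = tmul k a (tmul k b c)"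
proof (rule ext)
  fix w :: "nat list"
  show "tmul k (tmul k a b) c w = tmul k a (tmul k b c) w"
  proof (cases "length w \<le> k")
    case False then show ?thesis by (simp add: tmul_def)
  next
    case True
    define n where "n = length w"
    define f where "f j l = a (take j w) * b (take l (drop j w)) * c (drop l (drop j w))" for j l
    have L: "tmul k (tmul k a b) c w = (\<Sum>i\<le>n. \<Sum>j\<le>i. f j (i - j))"
      unfolding tmul_le[OF True] n_def[symmetric]
      apply (rule sum.cong[OF refl])
      using True unfolding n_def
      by (auto simp: tmul_le sum_distrib_right f_def min_def drop_take add.commute intro!: sum.cong)
    have R: "tmul k a (tmul k b c) w = (\<Sum>j\<le>n. \<Sum>l\<le>n - j. f j l)"
      unfolding tmul_le[OF True] n_def[symmetric]
      apply (rule sum.cong[OF refl])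
      using True unfolding n_def
      by (auto simp: tmul_le sum_distrib_left f_def mult.assoc intro!: sum.cong)
    have "(\<Sum>i\<le>n. \<Sum>j\<le>i. f j (i - j)) = (\<Sum>(j,l)\<in>{(j,l). j + l \<le> n}. f j l)"
      by (rule sum.triangle_reindex_eq[symmetric])
    also have "\<dots> = (\<Sum>j\<le>n. \<Sum>l\<le>n - j. f j l)"
      apply (subst sum.Sigma)
        apply simp
       apply simp
      apply (rule sum.cong)
       apply auto
      done
    finally show ?thesis using L R by simp
  qed
qed

lemma tmul_tone_left: "tmul k tone a = trunc k a"
proof (rule ext)
  fix w :: "nat list"
  show "tmul k tone a w = trunc k a w"
  proof (cases "length w \<le> k")
    case True
    have "tmul k tone a w = (\<Sum>i\<le>length w. if i = 0 then a w else 0)"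
      unfolding tmul_le[OF True] by (rule sum.cong) (auto simp: tone_def)
    then show ?thesis using True by (simp add: trunc_def)
  qed (simp add: tmul_def trunc_def)
qed

lemma tmul_tone_right: "tmul k a tone = trunc k a"
proof (rule ext)
  fix w :: "nat list"
  show "tmul k a tone w = trunc k a w"
  proof (cases "length w \<le> k")
    case True
    have "tmul k a tone w = (\<Sum>i\<le>length w. if i = length w then a w else 0)"
      unfolding tmul_le[OF True] by (rule sum.cong) (auto simp: tone_def)
    then show ?thesis using True by (simp add: trunc_def)
  qed (simp add: tmul_def trunc_def)
qed

lemma tmul_bilin:
  assumes "finite S" "finite T"
  shows "tmul k (\<lambda>w. \<Sum>i\<in>S. c i * A i w) (\<lambda>w. \<Sum>j\<in>T. e j * B j w)
       = (\<lambda>w. \<Sum>i\<in>S. \<Sum>j\<in>T. c i * e j * tmul k (A i) (B j) w)"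
proof (rule ext)
  fix w :: "nat list"
  show "tmul k (\<lambda>w. \<Sum>i\<in>S. c i * A i w) (\<lambda>w. \<Sum>j\<in>T. e j * B j w) w
       = (\<Sum>i\<in>S. \<Sum>j\<in>T. c i * e j * tmul k (A i) (B j) w)"
  proof (cases "length w \<le> k")
    case True
    have "(\<Sum>t\<le>length w. (\<Sum>i\<in>S. c i * A i (take t w)) * (\<Sum>j\<in>T. e j * B j (drop t w)))
        = (\<Sum>t\<le>length w. \<Sum>i\<in>S. \<Sum>j\<in>T. c i * e j * (A i (take t w) * B j (drop t w)))"
      by (rule sum.cong[OF refl]) (simp add: sum_product algebra_simps)
    also have "\<dots> = (\<Sum>i\<in>S. \<Sum>t\<le>length w. \<Sum>j\<in>T. c i * e j * (A i (take t w) * B j (drop t w)))"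
      by (rule sum.swap)
    also have "\<dots> = (\<Sum>i\<in>S. \<Sum>j\<in>T. \<Sum>t\<le>length w. c i * e j * (A i (take t w) * B j (drop t w)))"
      by (rule sum.cong[OF refl], rule sum.swap)
    finally show ?thesis
      unfolding tmul_le[OF True] by (simp add: sum_distrib_left)
  qed (simp add: tmul_def)
qed

lemma tmul_add_left: "tmul k (\<lambda>w. a w + b w) c = (\<lambda>w. tmul k a c w + tmul k b c w)"
  by (auto simp: tmul_def fun_eq_iff algebra_simps sum.distrib)

lemma tmul_add_right: "tmul k c (\<lambda>w. a w + b w) = (\<lambda>w. tmul k c a w + tmul k c b w)"
  by (auto simp: tmul_def fun_eq_iff algebra_simps sum.distrib)

lemma tmul_diff_left: "tmul k (\<lambda>w. a w - b w) c = (\<lambda>w. tmul k a c w - tmul k b c w)"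
  by (auto simp: tmul_def fun_eq_iff algebra_simps sum_subtractf)

lemma tmul_diff_right: "tmul k c (\<lambda>w. a w - b w) = (\<lambda>w. tmul k c a w - tmul k c b w)"
  by (auto simp: tmul_def fun_eq_iff algebra_simps sum_subtractf)

lemma tmul_scale_left: "tmul k (\<lambda>w. r * a w) c = (\<lambda>w. r * tmul k a c w)"
  by (auto simp: tmul_def fun_eq_iff algebra_simps sum_distrib_left)

lemma tmul_scale_right: "tmul k c (\<lambda>w. r * a w) = (\<lambda>w. r * tmul k c a w)"
  by (auto simp: tmul_def fun_eq_iff algebra_simps sum_distrib_left)

lemma tmul_zero_left: "tmul k (\<lambda>w. 0) c = (\<lambda>w. 0)"
  by (auto simp: tmul_def fun_eq_iff)

lemma tmul_zero_right: "tmul k c (\<lambda>w. 0) = (\<lambda>w. 0)"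
  by (auto simp: tmul_def fun_eq_iff)

lemma tmul_sum_left: "finite S \<Longrightarrow> tmul k (\<lambda>w. \<Sum>i\<in>S. f i w) c = (\<lambda>w. \<Sum>i\<in>S. tmul k (f i) c w)"
  by (induct S rule: finite_induct) (simp_all add: tmul_zero_left tmul_add_left)

lemma tmul_sum_right: "finite S \<Longrightarrow> tmul k c (\<lambda>w. \<Sum>i\<in>S. f i w) = (\<lambda>w. \<Sum>i\<in>S. tmul k c (f i) w)"
  by (induct S rule: finite_induct) (simp_all add: tmul_zero_right tmul_add_right)

lemma tmul_cong_trunc_left: "tmul k (trunc k a) b = tmul k a b"
  by (auto simp: tmul_def fun_eq_iff trunc_def intro!: sum.cong)

lemma tmul_cong_trunc_right: "tmul k a (trunc k b) = tmul k a b"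
  by (auto simp: tmul_def fun_eq_iff trunc_def intro!: sum.cong)

lemma tpow_add: "tpow k z (m + n) = tmul k (tpow k z m) (tpow k z n)"
proof (induct m)
  case 0
  then show ?case by (simp add: tmul_tone_left)
next
  case (Suc m)
  then show ?case by (simp add: tmul_assoc)
qed

lemma tpow_one: "tpow k z 1 = trunc k z"
  by (simp add: tmul_tone_right)

lemma lo_tmul: "lo p a \<Longrightarrow> lo q b \<Longrightarrow> lo (p + q) (tmul k a b)"
  unfolding lo_def
proof (intro allI impI)
  fix w :: "nat list"
  assume a: "\<forall>w. length w < p \<longrightarrow> a w = 0" and b: "\<forall>w. length w < q \<longrightarrow> b w = 0"
    and w: "length w < p + q"
  show "tmul k a b w = 0"
  proof (cases "length w \<le> k")
    case True
    show ?thesis unfolding tmul_le[OF True]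
    proof (rule sum.neutral, rule ballI)
      fix i assume "i \<in> {..length w}"
      show "a (take i w) * b (drop i w) = 0"
      proof (cases "i < p")
        case True then show ?thesis using a by (simp add: min_def)
      next
        case False then show ?thesis using b w \<open>i \<in> {..length w}\<close> by simp
      qed
    qed
  qed (simp add: tmul_def)
qed

lemma lo_mono: "lo n z \<Longrightarrow> m \<le> n \<Longrightarrow> lo m z"
  by (auto simp: lo_def)

lemma lo_0[simp]: "lo 0 z"
  by (simp add: lo_def)

lemma lo_tpow: "lo 1 z \<Longrightarrow> lo n (tpow k z n)"
proof (induct n)
  case 0 then show ?case by simp
next
  case (Suc n)
  then show ?case using lo_tmul[of 1 z n "tpow k z n" k] by simp
qed

lemma tpow_vanish: "lo 1 z \<Longrightarrow> k < n \<Longrightarrow> tpow k z n w = 0"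
proof -
  assume "lo 1 z" "k < n"
  then have "lo n (tpow k z n)" using lo_tpow by blast
  show "tpow k z n w = 0"
  proof (cases "length w < n")
    case True then show ?thesis using \<open>lo n (tpow k z n)\<close> by (simp add: lo_def)
  next
    case False then have "k < length w" using \<open>k < n\<close> by simp
    then show ?thesis using tclean_tpow[of k z n] by (simp add: tclean_def)
  qed
qed

lemma lo1_iff: "lo 1 z \<longleftrightarrow> z [] = 0"
  by (auto simp: lo_def)


unbundle fps_syntax

lemma lo_Suc0[simp]: "lo (Suc 0) z \<longleftrightarrow> z [] = 0"
  by (auto simp: lo_def)

definition ev :: "nat \<Rightarrow> tensor \<Rightarrow> real fps \<Rightarrow> tensor" where
  "ev k z f = (\<lambda>w. \<Sum>i\<le>k. f $ i * tpow k z i w)"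

lemma ev_add: "ev k z (f + g) = (\<lambda>w. ev k z f w + ev k z g w)"
  by (auto simp: ev_def fun_eq_iff algebra_simps sum.distrib)

lemma ev_diff: "ev k z (f - g) = (\<lambda>w. ev k z f w - ev k z g w)"
  by (auto simp: ev_def fun_eq_iff algebra_simps sum_subtractf)

lemma sum_if_mult: "finite S \<Longrightarrow> (\<Sum>i\<in>S. (if i = a then (c::real) else 0) * f i) = (if a \<in> S then c * f a else 0)"
proof -
  assume "finite S"
  have "(\<Sum>i\<in>S. (if i = a then c else 0) * f i) = (\<Sum>i\<in>S. if i = a then c * f i else 0)"
    by (rule sum.cong) auto
  then show ?thesis using \<open>finite S\<close> by (simp add: sum.delta')
qed

lemma ev_one: "ev k z 1 = tone"
  by (auto simp: ev_def fun_eq_iff fps_one_nth sum_if_mult)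

lemma ev_X: "1 \<le> k \<Longrightarrow> ev k z fps_X = trunc k z"
proof -
  assume k: "1 \<le> k"
  show ?thesis using k by (auto simp: ev_def fun_eq_iff fps_X_nth sum_if_mult tpow_one tmul_tone_right)
qed

lemma ev_clean[simp]: "tclean k (ev k z f)"
  using tclean_tpow by (auto simp: tclean_def ev_def)

lemma ev_lo1: "lo 1 z \<Longrightarrow> f $ 0 = 0 \<Longrightarrow> lo 1 (ev k z f)"
proof -
  assume z: "lo 1 z" and f: "f $ 0 = 0"
  have "ev k z f [] = (\<Sum>i\<le>k. 0)"
    unfolding ev_def
  proof (rule sum.cong[OF refl])
    fix i assume "i \<in> {..k}"
    show "f $ i * tpow k z i [] = 0"
    proof (cases i)
      case 0 then show ?thesis using f by simp
    next
      case (Suc j)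
      have "lo (Suc j) (tpow k z (Suc j))" using lo_tpow[OF z] by blast
      then show ?thesis using Suc by (simp add: lo_def)
    qed
  qed
  then show ?thesis by (simp add: lo_def)
qed

lemma ev_mult:
  assumes z: "lo 1 z"
  shows "ev k z (f * g) = tmul k (ev k z f) (ev k z g)"
proof -
  have "tmul k (ev k z f) (ev k z g) = (\<lambda>w. \<Sum>i\<le>k. \<Sum>j\<le>k. f $ i * g $ j * tmul k (tpow k z i) (tpow k z j) w)"
    unfolding ev_def by (rule tmul_bilin) auto
  also have "\<dots> = (\<lambda>w. \<Sum>i\<le>k. \<Sum>j\<le>k. f $ i * g $ j * tpow k z (i + j) w)"
    by (simp add: tpow_add)
  finally have A: "tmul k (ev k z f) (ev k z g) = (\<lambda>w. \<Sum>i\<le>k. \<Sum>j\<le>k. f $ i * g $ j * tpow k z (i + j) w)" .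
  show ?thesis
  proof (rule ext)
    fix w
    have "ev k z (f * g) w = (\<Sum>n\<le>k. \<Sum>i\<le>n. f $ i * g $ (n - i) * tpow k z (i + (n - i)) w)"
      unfolding ev_def fps_mult_nth
      by (auto simp: sum_distrib_right atLeast0AtMost intro!: sum.cong)
    also have "\<dots> = (\<Sum>(i,j)\<in>{(i,j). i + j \<le> k}. f $ i * g $ j * tpow k z (i + j) w)"
      by (rule sum.triangle_reindex_eq[symmetric])
    also have "\<dots> = (\<Sum>(i,j)\<in>{..k} \<times> {..k}. f $ i * g $ j * tpow k z (i + j) w)"
      by (rule sum.mono_neutral_left) (auto simp: tpow_vanish[OF z], metis not_le tpow_vanish[OF z])
    also have "\<dots> = (\<Sum>i\<le>k. \<Sum>j\<le>k. f $ i * g $ j * tpow k z (i + j) w)"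
      by (simp add: sum.cartesian_product)
    finally show "ev k z (f * g) w = tmul k (ev k z f) (ev k z g) w" using A by simp
  qed
qed

lemma ev_power: "lo 1 z \<Longrightarrow> tpow k (ev k z f) n = ev k z (f ^ n)"
  by (induct n) (simp_all add: ev_one ev_mult)

lemma fps_power_nth_small: "(g :: real fps) $ 0 = 0 \<Longrightarrow> n < i \<Longrightarrow> (g ^ i) $ n = 0"
proof (induct i arbitrary: n)
  case 0 then show ?case by simp
next
  case (Suc i)
  have "(g ^ Suc i) $ n = (\<Sum>j=0..n. g $ j * (g ^ i) $ (n - j))"
    by (simp add: fps_mult_nth)
  also have "\<dots> = 0"
  proof (rule sum.neutral, rule ballI)
    fix j assume "j \<in> {0..n}"
    show "g $ j * (g ^ i) $ (n - j) = 0"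
    proof (cases j)
      case 0 then show ?thesis using Suc by simp
    next
      case (Suc j') then show ?thesis using Suc.hyps[of "n - j"] Suc.prems \<open>j \<in> {0..n}\<close> by simp
    qed
  qed
  finally show ?case .
qed

lemma ev_compose:
  assumes z: "lo 1 z" and g: "g $ 0 = 0"
  shows "ev k z (f oo g) = ev k (ev k z g) f"
proof (rule ext)
  fix w
  have "ev k (ev k z g) f w = (\<Sum>i\<le>k. f $ i * ev k z (g ^ i) w)"
    unfolding ev_def[of k "ev k z g"] by (simp add: ev_power[OF z])
  also have "\<dots> = (\<Sum>i\<le>k. \<Sum>n\<le>k. f $ i * (g ^ i) $ n * tpow k z n w)"
    by (simp add: ev_def sum_distrib_left mult.assoc)
  also have "\<dots> = (\<Sum>n\<le>k. \<Sum>i\<le>k. f $ i * (g ^ i) $ n * tpow k z n w)"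
    by (rule sum.swap)
  also have "\<dots> = (\<Sum>n\<le>k. \<Sum>i\<le>n. f $ i * (g ^ i) $ n * tpow k z n w)"
  proof (rule sum.cong[OF refl])
    fix n assume n: "n \<in> {..k}"
    show "(\<Sum>i\<le>k. f $ i * (g ^ i) $ n * tpow k z n w) = (\<Sum>i\<le>n. f $ i * (g ^ i) $ n * tpow k z n w)"
      by (rule sum.mono_neutral_right) (use n fps_power_nth_small[OF g] in auto)
  qed
  also have "\<dots> = ev k z (f oo g) w"
    by (simp add: ev_def fps_compose_nth sum_distrib_right atLeast0AtMost)
  finally show "ev k z (f oo g) w = ev k (ev k z g) f w" by simp
qed

abbreviation "fE \<equiv> fps_exp (1::real)"
abbreviation "fL \<equiv> fps_ln (1::real)"
abbreviation "fG \<equiv> Abs_fps (\<lambda>n. 1::real)"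

lemma texp_ev: "texp k z = ev k z fE"
  by (simp add: texp_def ev_def fps_exp_def)

lemma tlog_ev: "tlog k s = ev k (tsub s tone) fL"
proof (rule ext)
  fix w
  have "ev k (tsub s tone) fL w = (\<Sum>l\<in>insert 0 {1..k}. fL $ l * tpow k (tsub s tone) l w)"
    unfolding ev_def by (rule sum.cong) auto
  also have "\<dots> = (\<Sum>l\<in>{1..k}. fL $ l * tpow k (tsub s tone) l w)"
    by simp
  also have "\<dots> = tlog k s w"
    unfolding tlog_def
  proof (rule sum.cong[OF refl])
    fix l assume l: "l \<in> {1..k}"
    then have "(-1::real) ^ (l - 1) = (-1) ^ (l + 1)"
      by (cases l) simp_all
    then show "fL $ l * tpow k (tsub s tone) l w = (-1) ^ (l + 1) / real l * tpow k (tsub s tone) l w"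
      using l by (simp add: fps_ln_nth)
  qed
  finally show "tlog k s w = ev k (tsub s tone) fL w" by simp
qed

lemma tinv_ev: "tinv k m = ev k (tsub tone m) fG"
  by (simp add: tinv_def ev_def)

lemma ev_scale: "ev k z (fps_const c * f) = (\<lambda>w. c * ev k z f w)"
  by (simp add: ev_def sum_distrib_left mult.assoc fun_eq_iff)

lemma lo1_tsub: "s [] = 1 \<Longrightarrow> lo 1 (tsub s tone)"
  by (simp add: tsub_def tone_def)

lemma tclean_tsub: "tclean k s \<Longrightarrow> tclean k (tsub s tone)"
  by (simp add: tclean_def tsub_def tone_def)

lemma fE_minus1_0: "(fE - 1) $ 0 = 0"
  by simp

lemma tlog_texp:
  assumes k: "1 \<le> k" and z: "lo 1 z" and c: "tclean k z"
  shows "tlog k (texp k z) = z"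
proof -
  have "tsub (texp k z) tone = ev k z (fE - 1)"
    by (simp add: texp_ev ev_diff ev_one tsub_def)
  then have "tlog k (texp k z) = ev k (ev k z (fE - 1)) fL"
    by (simp add: tlog_ev)
  also have "\<dots> = ev k z (fL oo (fE - 1))"
    by (rule ev_compose[OF z fE_minus1_0, symmetric])
  also have "fL oo (fE - 1) = fps_X"
    using fps_ln_fps_exp_inv[of "1::real"] fps_inv_fps_exp_compose(1)[of "1::real"] by simp
  finally show ?thesis using ev_X[OF k] c by simp
qed

lemma texp_tlog:
  assumes k: "1 \<le> k" and s0: "s [] = 1" and c: "tclean k s"
  shows "texp k (tlog k s) = s"
proof -
  define z where "z = tsub s tone"
  have z: "lo 1 z" using s0 by (simp add: z_def tsub_def tone_def)
  have zc: "tclean k z" using c by (simp add: z_def tclean_tsub)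
  have "texp k (tlog k s) = ev k (ev k z fL) fE"
    by (simp add: tlog_ev texp_ev z_def)
  also have "\<dots> = ev k z (fE oo fL)"
    by (rule ev_compose[OF z, symmetric]) simp
  also have "fE oo fL = ((fE - 1) oo fL) + 1"
    by (simp add: fps_compose_sub_distrib)
  also have "(fE - 1) oo fL = fps_X"
    using fps_ln_fps_exp_inv[of "1::real"] fps_inv_fps_exp_compose(2)[of "1::real"] by simp
  finally have "texp k (tlog k s) = ev k z (fps_X + 1)" .
  then show ?thesis
    using ev_X[OF k] zc by (auto simp: ev_add ev_one z_def tsub_def fun_eq_iff)
qed

lemma tinv_mul:
  assumes k: "1 \<le> k" and m0: "m [] = 1" and c: "tclean k m"
  shows "tmul k (tinv k m) m = tone" and "tmul k m (tinv k m) = tone"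
proof -
  define z where "z = tsub tone m"
  have z: "lo 1 z" using m0 by (simp add: z_def lo_def tsub_def tone_def)
  have zc: "tclean k z" using c by (simp add: z_def tclean_def tsub_def tone_def)
  have m: "m = ev k z (1 - fps_X)"
    using ev_X[OF k] zc by (auto simp: ev_diff ev_one z_def tsub_def fun_eq_iff)
  have i: "tinv k m = ev k z fG" by (simp add: tinv_ev z_def)
  have g1: "fG * (1 - fps_X) = 1" "(1 - fps_X) * fG = 1"
    using inverse_mult_eq_1'[of fG] inverse_mult_eq_1[of fG] by (simp_all add: fps_inverse_gp')
  show "tmul k (tinv k m) m = tone"
    by (subst m, simp add: i ev_mult[OF z, symmetric] g1 ev_one)
  show "tmul k m (tinv k m) = tone"
    by (subst (1) m, simp add: i ev_mult[OF z, symmetric] g1 ev_one)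
qed

lemma ev_lin: "1 \<le> k \<Longrightarrow> tclean k z \<Longrightarrow> ev k z (fps_const c * fps_X) = tscale c z"
  by (simp add: ev_scale ev_X tscale_def)

lemma texp_neg:
  assumes k: "1 \<le> k" and z: "lo 1 z" and c: "tclean k z"
  shows "tmul k (texp k z) (texp k (tscale (-1) z)) = tone"
proof -
  have "texp k (tscale (-1) z) = ev k (ev k z (fps_const (-1) * fps_X)) fE"
    by (simp add: texp_ev ev_lin[OF k c])
  also have "\<dots> = ev k z (fE oo (fps_const (-1) * fps_X))"
    by (rule ev_compose[OF z, symmetric]) simp
  also have "fE oo (fps_const (-1) * fps_X) = fps_exp (-1)"
    by simp
  finally have "tmul k (texp k z) (texp k (tscale (-1) z)) = ev k z (fE * fps_exp (-1))"
    by (simp add: texp_ev ev_mult[OF z])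
  also have "fE * fps_exp (-1) = 1"
    by (simp flip: fps_exp_add_mult)
  finally show ?thesis by (simp add: ev_one)
qed

lemma tpow_texp:
  assumes k: "1 \<le> k" and z: "lo 1 z" and c: "tclean k z"
  shows "tpow k (texp k z) n = texp k (tscale (real n) z)"
proof -
  have "tpow k (texp k z) n = ev k z (fE ^ n)"
    by (simp add: texp_ev ev_power[OF z])
  also have "fE ^ n = fps_exp (real n)"
    by (simp add: fps_exp_power_mult)
  also have "fps_exp (real n) = fE oo (fps_const (real n) * fps_X)"
    by simp
  also have "ev k z \<dots> = ev k (ev k z (fps_const (real n) * fps_X)) fE"
    by (rule ev_compose[OF z]) simp
  finally show ?thesis by (simp add: texp_ev ev_lin[OF k c])
qed


fun merge :: "bool list \<Rightarrow> 'a list \<Rightarrow> 'a list \<Rightarrow> 'a list" where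
  "merge [] x y = []"
| "merge (True # m) x y = hd x # merge m (tl x) y"
| "merge (False # m) x y = hd y # merge m x (tl y)"

definition cnt :: "bool list \<Rightarrow> nat" where "cnt m = length (filter id m)"

definition masks :: "nat \<Rightarrow> nat \<Rightarrow> bool list set" where
  "masks p q = {m. length m = p + q \<and> cnt m = p}"

definition sh :: "tensor \<Rightarrow> nat list \<Rightarrow> nat list \<Rightarrow> real" where
  "sh z x y = (\<Sum>m\<in>masks (length x) (length y). z (merge m x y))"

lemma cnt_simps[simp]: "cnt [] = 0" "cnt (True # m) = Suc (cnt m)" "cnt (False # m) = cnt m"
  "cnt (m1 @ m2) = cnt m1 + cnt m2"
  by (simp_all add: cnt_def)

lemma cnt_le: "cnt m \<le> length m"
  by (simp add: cnt_def)

lemma cnt_take_le: "cnt (take t m) \<le> cnt m"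
proof -
  have "cnt m = cnt (take t m) + cnt (drop t m)"
    by (metis append_take_drop_id cnt_simps(4))
  then show ?thesis by simp
qed

lemma cnt_take_diff: "length (take t m) - cnt (take t m) \<le> length m - cnt m"
proof -
  have e: "cnt m = cnt (take t m) + cnt (drop t m)"
    by (metis append_take_drop_id cnt_simps(4))
  have "cnt (drop t m) \<le> length (drop t m)" by (rule cnt_le)
  moreover have "length m = length (take t m) + length (drop t m)" by simp
  ultimately show ?thesis using e by linarith
qed

lemma finite_masks[simp]: "finite (masks p q)"
proof -
  have "masks p q \<subseteq> {m. set m \<subseteq> UNIV \<and> length m = p + q}" by (auto simp: masks_def)
  moreover have "finite {m::bool list. set m \<subseteq> UNIV \<and> length m = p + q}"
    by (rule finite_lists_length_eq) simp
  ultimately show ?thesis by (rule finite_subset)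
qed

lemma length_merge[simp]: "length (merge m x y) = length m"
  by (induct m x y rule: merge.induct) auto

lemma take_merge: "take t (merge m x y) = merge (take t m) x y"
proof (induct m x y arbitrary: t rule: merge.induct)
  case (1 x y) then show ?case by simp
next
  case (2 m x y) then show ?case by (cases t) auto
next
  case (3 m x y) then show ?case by (cases t) auto
qed

lemma drop_merge: "drop t (merge m x y) = merge (drop t m) (drop (cnt (take t m)) x) (drop (t - cnt (take t m)) y)"
proof (induct m x y arbitrary: t rule: merge.induct)
  case (1 x y) then show ?case by simp
next
  case (2 m x y) then show ?case by (cases t) (auto simp: drop_Suc)
next
  case (3 m x y)
  show ?case
  proof (cases t)
    case 0 then show ?thesis by simp
  next
    case (Suc t')
    have "cnt (take t' m) \<le> t'" using cnt_le[of "take t' m"] by simp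
    then have "Suc t' - cnt (take t' m) = Suc (t' - cnt (take t' m))" by simp
    then show ?thesis using Suc 3 by (simp add: drop_Suc)
  qed
qed

lemma merge_take: "merge m x y = merge m (take (cnt m) x) (take (length m - cnt m) y)"
proof (induct m x y rule: merge.induct)
  case (1 x y) then show ?case by simp
next
  case (2 m x y)
  then show ?case by (cases x) (auto simp: tl_take)
next
  case (3 m x y)
  have "cnt m \<le> length m" by (rule cnt_le)
  then have "Suc (length m) - cnt m = Suc (length m - cnt m)" by simp
  then show ?case using 3 by (cases y) (auto simp: tl_take)
qed

lemma masks_comb:
  fixes F :: "bool list \<Rightarrow> bool list \<Rightarrow> real"
  shows "(\<Sum>m\<in>masks p q. \<Sum>t\<le>p + q. F (take t m) (drop t m))
       = (\<Sum>i\<le>p. \<Sum>j\<le>q. \<Sum>m1\<in>masks i j. \<Sum>m2\<in>masks (p - i) (q - j). F m1 m2)"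
proof -
  have L: "(\<Sum>m\<in>masks p q. \<Sum>t\<le>p + q. F (take t m) (drop t m))
      = (\<Sum>(m,t)\<in>Sigma (masks p q) (\<lambda>_. {..p+q}). F (take t m) (drop t m))"
    by (rule sum.Sigma) auto
  have R: "(\<Sum>i\<le>p. \<Sum>j\<le>q. \<Sum>m1\<in>masks i j. \<Sum>m2\<in>masks (p - i) (q - j). F m1 m2)
      = (\<Sum>((i,j),(m1,m2))\<in>Sigma ({..p} \<times> {..q}) (\<lambda>(i,j). masks i j \<times> masks (p - i) (q - j)). F m1 m2)"
  proof -
    have "(\<Sum>((i,j),(m1,m2))\<in>Sigma ({..p} \<times> {..q}) (\<lambda>(i,j). masks i j \<times> masks (p - i) (q - j)). F m1 m2)
        = (\<Sum>ij\<in>{..p} \<times> {..q}. \<Sum>mm\<in>masks (fst ij) (snd ij) \<times> masks (p - fst ij) (q - snd ij). F (fst mm) (snd mm))"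
      by (subst sum.Sigma) (auto simp: split_def)
    also have "\<dots> = (\<Sum>i\<le>p. \<Sum>j\<le>q. \<Sum>mm\<in>masks i j \<times> masks (p - i) (q - j). F (fst mm) (snd mm))"
      by (subst sum.Sigma) (auto simp: split_def intro!: sum.cong)
    also have "\<dots> = (\<Sum>i\<le>p. \<Sum>j\<le>q. \<Sum>m1\<in>masks i j. \<Sum>m2\<in>masks (p - i) (q - j). F m1 m2)"
      by (simp add: sum.cartesian_product split_def)
    finally show ?thesis by simp
  qed
  have B: "(\<Sum>(m,t)\<in>Sigma (masks p q) (\<lambda>_. {..p+q}). F (take t m) (drop t m))
      = (\<Sum>((i,j),(m1,m2))\<in>Sigma ({..p} \<times> {..q}) (\<lambda>(i,j). masks i j \<times> masks (p - i) (q - j)). F m1 m2)"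
  proof (rule sum.reindex_bij_witness[where i = "\<lambda>((i,j),(m1,m2)). (m1 @ m2, length m1)"
        and j = "\<lambda>(m,t). ((cnt (take t m), t - cnt (take t m)), (take t m, drop t m))"], goal_cases)
    case (1 a)
    then obtain m t where a: "a = (m, t)" "m \<in> masks p q" "t \<le> p + q" by auto
    then have lm: "length m = p + q" "cnt m = p" by (auto simp: masks_def)
    then show ?case using a by simp
  next
    case (2 a)
    then obtain m t where a: "a = (m, t)" "m \<in> masks p q" "t \<le> p + q" by auto
    then have lm: "length m = p + q" "cnt m = p" by (auto simp: masks_def)
    have e: "cnt m = cnt (take t m) + cnt (drop t m)"
      by (metis append_take_drop_id cnt_simps(4))
    have c1: "cnt (take t m) \<le> t" using cnt_le[of "take t m"] a lm by simp
    have c2: "cnt (drop t m) \<le> p + q - t" using cnt_le[of "drop t m"] lm by simp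
    have c3: "cnt (take t m) \<le> p" using cnt_take_le[of t m] lm by simp
    have c4: "t - cnt (take t m) \<le> q" using cnt_take_diff[of t m] lm a by simp
    have m1: "take t m \<in> masks (cnt (take t m)) (t - cnt (take t m))"
      using c1 a lm by (simp add: masks_def)
    have m2: "drop t m \<in> masks (p - cnt (take t m)) (q - (t - cnt (take t m)))"
      using c1 c3 c4 a lm e by (simp add: masks_def)
    show ?case using a c3 c4 m1 m2 by simp
  next
    case (3 b)
    then obtain i j m1 m2 where b: "b = ((i,j),(m1,m2))" "i \<le> p" "j \<le> q" "m1 \<in> masks i j"
      "m2 \<in> masks (p - i) (q - j)" by auto
    then show ?case by (auto simp: masks_def)
  next
    case (4 b)
    then obtain i j m1 m2 where b: "b = ((i,j),(m1,m2))" "i \<le> p" "j \<le> q" "m1 \<in> masks i j"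
      "m2 \<in> masks (p - i) (q - j)" by auto
    then show ?case by (auto simp: masks_def)
  next
    case (5 a)
    then show ?case by auto
  qed
  show ?thesis using L R B by simp
qed

lemma sh_tmul:
  assumes xy: "length x + length y \<le> k"
  shows "sh (tmul k a b) x y = (\<Sum>i\<le>length x. \<Sum>j\<le>length y.
            sh a (take i x) (take j y) * sh b (drop i x) (drop j y))"
proof -
  define p where "p = length x"
  define q where "q = length y"
  define F where "F m1 m2 = a (merge m1 (take (cnt m1) x) (take (length m1 - cnt m1) y)) *
      b (merge m2 (drop (cnt m1) x) (drop (length m1 - cnt m1) y))" for m1 m2
  have "sh (tmul k a b) x y = (\<Sum>m\<in>masks p q. \<Sum>t\<le>p + q. F (take t m) (drop t m))"
    unfolding sh_def p_def[symmetric] q_def[symmetric]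
  proof (rule sum.cong[OF refl])
    fix m assume m: "m \<in> masks p q"
    then have lm: "length m = p + q" by (simp add: masks_def)
    have "length (merge m x y) \<le> k" using lm xy by (simp add: p_def q_def)
    then have "tmul k a b (merge m x y) = (\<Sum>t\<le>p + q. a (take t (merge m x y)) * b (drop t (merge m x y)))"
      by (simp add: tmul_le lm)
    also have "\<dots> = (\<Sum>t\<le>p + q. F (take t m) (drop t m))"
    proof (rule sum.cong[OF refl])
      fix t assume tt: "t \<in> {..p + q}"
      then have lt: "length (take t m) = t" using lm by simp
      have mt: "min (length m) t = t" using tt lm by simp
      show "a (take t (merge m x y)) * b (drop t (merge m x y)) = F (take t m) (drop t m)"
        unfolding F_def lt take_merge drop_merge
        by (subst merge_take) (simp add: lt mt)
    qed
    finally show "tmul k a b (merge m x y) = (\<Sum>t\<le>p + q. F (take t m) (drop t m))" .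
  qed
  also have "\<dots> = (\<Sum>i\<le>p. \<Sum>j\<le>q. \<Sum>m1\<in>masks i j. \<Sum>m2\<in>masks (p - i) (q - j). F m1 m2)"
    by (rule masks_comb)
  also have "\<dots> = (\<Sum>i\<le>p. \<Sum>j\<le>q. sh a (take i x) (take j y) * sh b (drop i x) (drop j y))"
  proof (intro sum.cong[OF refl])
    fix i j assume i: "i \<in> {..p}" and j: "j \<in> {..q}"
    have "(\<Sum>m1\<in>masks i j. \<Sum>m2\<in>masks (p - i) (q - j). F m1 m2)
        = (\<Sum>m1\<in>masks i j. \<Sum>m2\<in>masks (p - i) (q - j). a (merge m1 (take i x) (take j y)) *
             b (merge m2 (drop i x) (drop j y)))"
    proof (intro sum.cong[OF refl])
      fix m1 m2 assume "m1 \<in> masks i j"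
      then have "cnt m1 = i" "length m1 - cnt m1 = j" by (auto simp: masks_def)
      then show "F m1 m2 = a (merge m1 (take i x) (take j y)) * b (merge m2 (drop i x) (drop j y))"
        by (simp add: F_def)
    qed
    also have "\<dots> = sh a (take i x) (take j y) * sh b (drop i x) (drop j y)"
    proof -
      have l: "length (take i x) = i" "length (take j y) = j" "length (drop i x) = p - i" "length (drop j y) = q - j"
        using i j by (auto simp: p_def q_def)
      show ?thesis unfolding sh_def l by (simp add: sum_product)
    qed
    finally show "(\<Sum>m1\<in>masks i j. \<Sum>m2\<in>masks (p - i) (q - j). F m1 m2)
        = sh a (take i x) (take j y) * sh b (drop i x) (drop j y)" .
  qed
  finally show ?thesis by (simp add: p_def q_def)
qed

lemma masks_0_left: "masks 0 q = {replicate q False}"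
proof -
  have "m \<in> masks 0 q \<longleftrightarrow> m = replicate q False" for m
  proof
    assume "m \<in> masks 0 q"
    then have "length m = q" "filter id m = []" by (auto simp: masks_def cnt_def)
    then show "m = replicate q False"
      by (intro replicate_eqI) (auto simp: filter_empty_conv)
  qed (simp add: masks_def cnt_def)
  then show ?thesis by auto
qed

lemma masks_0_right: "masks p 0 = {replicate p True}"
proof -
  have "m \<in> masks p 0 \<longleftrightarrow> m = replicate p True" for m
  proof
    assume "m \<in> masks p 0"
    then have "length m = p" "length (filter id m) = length m" by (auto simp: masks_def cnt_def)
    then show "m = replicate p True"
    proof (intro replicate_eqI)
      fix b assume "length (filter id m) = length m" "b \<in> set m"
      then show "b = True" using length_filter_less[of b m id] by auto
    qed simp
  qed (simp add: masks_def cnt_def)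
  then show ?thesis by auto
qed

lemma merge_false: "length y = q \<Longrightarrow> merge (replicate q False) x y = y"
  by (induct q arbitrary: y) (auto simp: length_Suc_conv)

lemma merge_true: "length x = p \<Longrightarrow> merge (replicate p True) x y = x"
  by (induct p arbitrary: x) (auto simp: length_Suc_conv)

lemma sh_nil_left[simp]: "sh z [] y = z y"
  by (simp add: sh_def masks_0_left merge_false)

lemma sh_nil_right[simp]: "sh z x [] = z x"
  by (simp add: sh_def masks_0_right merge_true)

lemma sh_add: "sh (\<lambda>w. a w + b w) x y = sh a x y + sh b x y"
  by (simp add: sh_def sum.distrib)

lemma sh_diff: "sh (\<lambda>w. a w - b w) x y = sh a x y - sh b x y"
  by (simp add: sh_def sum_subtractf)

lemma sh_scale: "sh (\<lambda>w. c * a w) x y = c * sh a x y"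
  by (simp add: sh_def sum_distrib_left)

lemma sh_sum: "sh (\<lambda>w. \<Sum>i\<in>S. f i w) x y = (\<Sum>i\<in>S. sh (f i) x y)"
  unfolding sh_def by (rule sum.swap)

lemma sh_zero[simp]: "sh (\<lambda>w. 0) x y = 0"
  by (simp add: sh_def)

lemma sh_cong: "(\<And>w. length w = length x + length y \<Longrightarrow> a w = b w) \<Longrightarrow> sh a x y = sh b x y"
  unfolding sh_def by (rule sum.cong) (auto simp: masks_def)

definition prim :: "nat \<Rightarrow> tensor \<Rightarrow> bool" where
  "prim k p \<longleftrightarrow> p [] = 0 \<and> (\<forall>x y. x \<noteq> [] \<longrightarrow> y \<noteq> [] \<longrightarrow> length x + length y \<le> k \<longrightarrow> sh p x y = 0)"

definition glike :: "nat \<Rightarrow> tensor \<Rightarrow> bool" where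
  "glike k g \<longleftrightarrow> g [] = 1 \<and> (\<forall>x y. length x + length y \<le> k \<longrightarrow> sh g x y = g x * g y)"


lemma prim_sh: "prim k a \<Longrightarrow> length u + length v \<le> k \<Longrightarrow>
    sh a u v = (if u = [] then a v else if v = [] then a u else 0)"
  by (auto simp: prim_def)

lemma sum2_delta: "(i0::nat) \<le> p \<Longrightarrow> (j0::nat) \<le> q \<Longrightarrow>
   (\<Sum>i\<le>p. \<Sum>j\<le>q. if i = i0 \<and> j = j0 then c else 0) = (c::real)"
proof -
  assume a: "i0 \<le> p" "j0 \<le> q"
  have "(\<Sum>i\<le>p. \<Sum>j\<le>q. if i = i0 \<and> j = j0 then c else 0) = (\<Sum>i\<le>p. if i = i0 then c else 0)"
  proof (rule sum.cong[OF refl])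
    fix i
    have "(\<Sum>j\<le>q. if i = i0 \<and> j = j0 then c else 0) = (\<Sum>j\<le>q. if j = j0 then (if i = i0 then c else 0) else 0)"
      by (rule sum.cong) auto
    then show "(\<Sum>j\<le>q. if i = i0 \<and> j = j0 then c else 0) = (if i = i0 then c else 0)"
      using a by (simp add: sum.delta)
  qed
  then show ?thesis using a by (simp add: sum.delta)
qed

lemma prim_tmul_sh:
  assumes a: "prim k a" and b: "prim k b" and x: "x \<noteq> []" and y: "y \<noteq> []"
    and xy: "length x + length y \<le> k"
  shows "sh (tmul k a b) x y = a y * b x + a x * b y"
proof -
  have a0: "a [] = 0" and b0: "b [] = 0" using a b by (auto simp: prim_def)
  have trm: "sh a (take i x) (take j y) * sh b (drop i x) (drop j y) =
      (if i = 0 \<and> j = length y then a y * b x else 0) + (if i = length x \<and> j = 0 then a x * b y else 0)"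
    if i: "i \<le> length x" and j: "j \<le> length y" for i j
  proof -
    have l1: "length (take i x) + length (take j y) \<le> k" using xy i j by simp
    have l2: "length (drop i x) + length (drop j y) \<le> k" using xy i j by simp
    have A: "sh a (take i x) (take j y) = (if i = 0 then a (take j y) else if j = 0 then a (take i x) else 0)"
      using prim_sh[OF a l1] x y i j by auto
    have B: "sh b (drop i x) (drop j y) = (if i = length x then b (drop j y) else if j = length y then b (drop i x) else 0)"
      using prim_sh[OF b l2] x i j by auto
    show ?thesis
    proof (cases "i = 0")
      case True
      then have "i \<noteq> length x" using x by simp
      then show ?thesis using True a0 j y A B by (cases "j = length y") simp_all
    next
      case False
      then show ?thesis using a0 b0 x y i j A B by (cases "j = 0"; cases "i = length x") simp_all
    qed
  qed
  have "sh (tmul k a b) x y = (\<Sum>i\<le>length x. \<Sum>j\<le>length y.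
      (if i = 0 \<and> j = length y then a y * b x else 0) + (if i = length x \<and> j = 0 then a x * b y else 0))"
    unfolding sh_tmul[OF xy] by (intro sum.cong[OF refl]) (simp add: trm)
  also have "\<dots> = a y * b x + a x * b y"
    by (simp add: sum.distrib sum2_delta)
  finally show ?thesis .
qed

lemma prim_tbracket:
  assumes a: "prim k a" and b: "prim k b"
  shows "prim k (tbracket k a b)"
  unfolding prim_def
proof (intro conjI allI impI)
  show "tbracket k a b [] = 0"
    using a b by (simp add: prim_def tbracket_def tsub_def tmul_def)
  fix x y :: "nat list" assume "x \<noteq> []" "y \<noteq> []" "length x + length y \<le> k"
  then show "sh (tbracket k a b) x y = 0"
    unfolding tbracket_def tsub_def sh_diff
    using prim_tmul_sh[OF a b] prim_tmul_sh[OF b a] by simp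
qed

lemma prim_basis: "prim k (basis_vec i)"
  unfolding prim_def
proof (intro conjI allI impI)
  show "basis_vec i [] = 0" by (simp add: basis_vec_def)
  fix x y :: "nat list" assume xy: "x \<noteq> []" "y \<noteq> []"
  show "sh (basis_vec i) x y = 0"
    unfolding sh_def
  proof (rule sum.neutral, rule ballI)
    fix m assume "m \<in> masks (length x) (length y)"
    then have "length (merge m x y) = length x + length y" by (simp add: masks_def)
    moreover have "length x + length y \<ge> 2" using xy by (cases x; cases y; simp)
    ultimately have "length (merge m x y) \<noteq> length [i]" by simp
    then have "merge m x y \<noteq> [i]" by metis
    then show "basis_vec i (merge m x y) = 0" by (simp add: basis_vec_def)
  qed
qed

lemma prim_zero: "prim k tzero"
  by (simp add: prim_def tzero_def)

lemma prim_add: "prim k a \<Longrightarrow> prim k b \<Longrightarrow> prim k (tadd a b)"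
  by (simp add: prim_def tadd_def sh_add)

lemma prim_scale: "prim k a \<Longrightarrow> prim k (tscale c a)"
  by (simp add: prim_def tscale_def sh_scale)

lemma lie_prim: "z \<in> lie_alg d k \<Longrightarrow> prim k z"
  by (induct z rule: lie_alg.induct)
     (auto intro: prim_basis prim_zero prim_add prim_scale prim_tbracket)

lemma tensors_tmul: "a \<in> tensors d k' \<Longrightarrow> b \<in> tensors d k' \<Longrightarrow> tmul k a b \<in> tensors d k"
  unfolding tensors_def
proof (intro CollectI allI impI)
  fix w
  assume a: "a \<in> {z. \<forall>w. z w \<noteq> 0 \<longrightarrow> length w \<le> k' \<and> set w \<subseteq> {..<d}}"
    and b: "b \<in> {z. \<forall>w. z w \<noteq> 0 \<longrightarrow> length w \<le> k' \<and> set w \<subseteq> {..<d}}"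
    and w: "tmul k a b w \<noteq> 0"
  have lw: "length w \<le> k"
  proof (rule ccontr)
    assume "\<not> length w \<le> k"
    then show False using w by (simp add: tmul_gt)
  qed
  have "(\<Sum>i\<le>length w. a (take i w) * b (drop i w)) \<noteq> 0" using w lw by (simp add: tmul_le)
  then obtain i where "i \<in> {..length w}" "a (take i w) * b (drop i w) \<noteq> 0"
    using sum.not_neutral_contains_not_neutral by blast
  then have "a (take i w) \<noteq> 0" "b (drop i w) \<noteq> 0" by auto
  then have s1: "set (take i w) \<subseteq> {..<d}" and s2: "set (drop i w) \<subseteq> {..<d}" using a b by blast+
  have "set w = set (take i w) \<union> set (drop i w)"
    by (metis append_take_drop_id set_append)
  then have "set w \<subseteq> {..<d}" using s1 s2 by simp
  then show "length w \<le> k \<and> set w \<subseteq> {..<d}" using lw by simp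
qed

lemma tensors_add: "a \<in> tensors d k \<Longrightarrow> b \<in> tensors d k \<Longrightarrow> (\<lambda>w. a w + b w) \<in> tensors d k"
  unfolding tensors_def
proof (intro CollectI allI impI)
  fix w assume a: "a \<in> {z. \<forall>w. z w \<noteq> 0 \<longrightarrow> length w \<le> k \<and> set w \<subseteq> {..<d}}"
    and b: "b \<in> {z. \<forall>w. z w \<noteq> 0 \<longrightarrow> length w \<le> k \<and> set w \<subseteq> {..<d}}"
    and "a w + b w \<noteq> 0"
  then have "a w \<noteq> 0 \<or> b w \<noteq> 0" by auto
  then show "length w \<le> k \<and> set w \<subseteq> {..<d}" using a b by auto
qed

lemma tensors_scale: "a \<in> tensors d k \<Longrightarrow> (\<lambda>w. c * a w) \<in> tensors d k"
  by (auto simp: tensors_def)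

lemma tensors_diff: "a \<in> tensors d k \<Longrightarrow> b \<in> tensors d k \<Longrightarrow> (\<lambda>w. a w - b w) \<in> tensors d k"
  using tensors_add[of a d k "\<lambda>w. (-1) * b w"] tensors_scale[of b d k "-1"] by simp

lemma tensors_sum: "finite S \<Longrightarrow> (\<And>i. i \<in> S \<Longrightarrow> f i \<in> tensors d k) \<Longrightarrow> (\<lambda>w. \<Sum>i\<in>S. f i w) \<in> tensors d k"
proof (induct S rule: finite_induct)
  case empty then show ?case by (simp add: tensors_def)
next
  case (insert x F) then show ?case using tensors_add[of "f x" d k "\<lambda>w. \<Sum>i\<in>F. f i w"] by simp
qed

lemma tensors_mono: "a \<in> tensors d k \<Longrightarrow> k \<le> k' \<Longrightarrow> a \<in> tensors d k'"
  by (auto simp: tensors_def)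

lemma lie_tensors: assumes k: "1 \<le> k" shows "z \<in> lie_alg d k \<Longrightarrow> z \<in> tensors d k"
proof (induct z rule: lie_alg.induct)
  case (gen i) then show ?case
    using k by (auto simp: tensors_def basis_vec_def)
next
  case zero then show ?case by (simp add: tensors_def tzero_def)
next
  case (add a b) then show ?case unfolding tadd_def by (simp add: tensors_add)
next
  case (scale a c) then show ?case by (auto simp: tensors_def tscale_def)
next
  case (bracket a b)
  then have "tmul k a b \<in> tensors d k" "tmul k b a \<in> tensors d k" by (simp_all add: tensors_tmul)
  then show ?case unfolding tbracket_def tsub_def by (rule tensors_diff)
qed


unbundle fps_syntax

lemma merge_Nil_iff[simp]: "merge m x y = [] \<longleftrightarrow> m = []"
  by (cases m rule: list.exhaust; cases "hd m") auto

lemma sum_if0_outer: "(\<Sum>i\<le>(p::nat). \<Sum>j\<le>(q::nat). if i = 0 then F i j else 0) = (\<Sum>j\<le>q. (F 0 j :: real))"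
proof -
  have "(\<Sum>i\<le>p. \<Sum>j\<le>q. if i = 0 then F i j else 0) = (\<Sum>i\<le>p. if i = 0 then (\<Sum>j\<le>q. F i j) else 0)"
    by (rule sum.cong) auto
  then show ?thesis by simp
qed

lemma sum_if0_inner: "(\<Sum>i\<le>(p::nat). \<Sum>j\<le>(q::nat). if j = 0 then F i j else 0) = (\<Sum>i\<le>p. (F i 0 :: real))"
  by simp

lemma tone_sh: "sh tone x y = tone x * tone y"
proof (cases "x = [] \<and> y = []")
  case True then show ?thesis by (simp add: tone_def)
next
  case False
  have "sh tone x y = 0" unfolding sh_def
  proof (rule sum.neutral, rule ballI)
    fix m assume "m \<in> masks (length x) (length y)"
    then have "length m = length x + length y" by (simp add: masks_def)
    then have "merge m x y \<noteq> []" using False by auto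
    then show "tone (merge m x y) = 0" by (simp add: tone_def)
  qed
  then show ?thesis using False by (auto simp: tone_def)
qed

lemma glike_tone: "glike k tone"
  by (simp add: glike_def tone_sh) (simp add: tone_def)

lemma glike_tmul:
  assumes g: "glike k g" and h: "glike k h"
  shows "glike k (tmul k g h)"
  unfolding glike_def
proof (intro conjI allI impI)
  show "tmul k g h [] = 1" using g h by (simp add: glike_def tmul_def)
  fix x y :: "nat list" assume xy: "length x + length y \<le> k"
  have lx: "length x \<le> k" and ly: "length y \<le> k" using xy by auto
  have "sh (tmul k g h) x y = (\<Sum>i\<le>length x. \<Sum>j\<le>length y.
      (g (take i x) * h (drop i x)) * (g (take j y) * h (drop j y)))"
    unfolding sh_tmul[OF xy]
  proof (intro sum.cong[OF refl])
    fix i j assume i: "i \<in> {..length x}" and j: "j \<in> {..length y}"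
    have "length (take i x) + length (take j y) \<le> k" "length (drop i x) + length (drop j y) \<le> k"
      using xy i j by auto
    then show "sh g (take i x) (take j y) * sh h (drop i x) (drop j y) =
        (g (take i x) * h (drop i x)) * (g (take j y) * h (drop j y))"
      using g h by (simp add: glike_def)
  qed
  also have "\<dots> = tmul k g h x * tmul k g h y"
    by (simp add: tmul_le[OF lx] tmul_le[OF ly] sum_product)
  finally show "sh (tmul k g h) x y = tmul k g h x * tmul k g h y" .
qed

lemma glike_tpow: "glike k g \<Longrightarrow> glike k (tpow k g n)"
  by (induct n) (simp_all add: glike_tone glike_tmul)

lemma pascal_sum:
  fixes f g :: "nat \<Rightarrow> real"
  shows "(\<Sum>l\<le>Suc n. real (Suc n choose l) * f l * g (Suc n - l)) =
         (\<Sum>l\<le>n. real (n choose l) * f l * g (Suc n - l)) + (\<Sum>l\<le>n. real (n choose l) * f (Suc l) * g (n - l))"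
proof -
  define G where "G l = real (n choose l) * f l * g (Suc n - l)" for l
  have "(\<Sum>l\<le>Suc n. real (Suc n choose l) * f l * g (Suc n - l)) =
      f 0 * g (Suc n) + (\<Sum>l\<le>n. real (Suc n choose Suc l) * f (Suc l) * g (n - l))"
    by (subst sum.atMost_Suc_shift) simp
  also have "\<dots> = f 0 * g (Suc n) + (\<Sum>l\<le>n. real (n choose Suc l) * f (Suc l) * g (n - l))
      + (\<Sum>l\<le>n. real (n choose l) * f (Suc l) * g (n - l))"
    by (simp add: sum.distrib algebra_simps)
  also have "f 0 * g (Suc n) + (\<Sum>l\<le>n. real (n choose Suc l) * f (Suc l) * g (n - l)) = (\<Sum>l\<le>Suc n. G l)"
    by (subst sum.atMost_Suc_shift) (simp add: G_def)
  also have "(\<Sum>l\<le>Suc n. G l) = (\<Sum>l\<le>n. G l)"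
    by (simp add: G_def)
  finally show ?thesis by (simp add: G_def)
qed

lemma prim_sh2:
  assumes a: "prim k a" and uv: "length u + length v \<le> k"
  shows "sh a u v = (if u = [] then a v else 0) + (if v = [] then a u else 0)"
proof -
  have "a [] = 0" using a by (simp add: prim_def)
  then show ?thesis using prim_sh[OF a uv] by auto
qed

lemma sh_tpow_prim:
  assumes a: "prim k a"
  shows "length x + length y \<le> k \<Longrightarrow>
    sh (tpow k a n) x y = (\<Sum>l\<le>n. real (n choose l) * tpow k a l x * tpow k a (n - l) y)"
proof (induct n arbitrary: x y)
  case 0
  then show ?case by (simp add: tone_sh)
next
  case (Suc n)
  note xy = Suc.prems
  have lx: "length x \<le> k" and ly: "length y \<le> k" using xy by auto
  define P where "P l w = tpow k a l w" for l w
  have "sh (tpow k a (Suc n)) x y = (\<Sum>i\<le>length x. \<Sum>j\<le>length y.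
     ((if i = 0 then a (take j y) else 0) + (if j = 0 then a (take i x) else 0)) * sh (tpow k a n) (drop i x) (drop j y))"
    unfolding tpow.simps sh_tmul[OF xy]
  proof (intro sum.cong[OF refl])
    fix i j assume i: "i \<in> {..length x}" and j: "j \<in> {..length y}"
    have l: "length (take i x) + length (take j y) \<le> k" using xy i j by auto
    have "take i x = [] \<longleftrightarrow> i = 0" "take j y = [] \<longleftrightarrow> j = 0" using i j by auto
    then show "sh a (take i x) (take j y) * sh (tpow k a n) (drop i x) (drop j y) =
     ((if i = 0 then a (take j y) else 0) + (if j = 0 then a (take i x) else 0)) * sh (tpow k a n) (drop i x) (drop j y)"
      using prim_sh2[OF a l] by simp
  qed
  also have "\<dots> = (\<Sum>j\<le>length y. a (take j y) * sh (tpow k a n) x (drop j y)) +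
                   (\<Sum>i\<le>length x. a (take i x) * sh (tpow k a n) (drop i x) y)"
  proof -
    have "(\<Sum>i\<le>length x. \<Sum>j\<le>length y.
     ((if i = 0 then a (take j y) else 0) + (if j = 0 then a (take i x) else 0)) * sh (tpow k a n) (drop i x) (drop j y))
     = (\<Sum>i\<le>length x. \<Sum>j\<le>length y. if i = 0 then a (take j y) * sh (tpow k a n) (drop i x) (drop j y) else 0)
     + (\<Sum>i\<le>length x. \<Sum>j\<le>length y. if j = 0 then a (take i x) * sh (tpow k a n) (drop i x) (drop j y) else 0)"
      by (simp only: sum.distrib[symmetric] distrib_right) (intro sum.cong[OF refl], simp)
    then show ?thesis by (simp only: sum_if0_outer sum_if0_inner) simp
  qed
  also have "(\<Sum>j\<le>length y. a (take j y) * sh (tpow k a n) x (drop j y)) =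
       (\<Sum>l\<le>n. real (n choose l) * P l x * P (Suc n - l) y)"
  proof -
    have "(\<Sum>j\<le>length y. a (take j y) * sh (tpow k a n) x (drop j y)) =
        (\<Sum>j\<le>length y. \<Sum>l\<le>n. real (n choose l) * P l x * (a (take j y) * P (n - l) (drop j y)))"
      by (intro sum.cong[OF refl]) (use xy in \<open>simp add: Suc.hyps sum_distrib_left P_def algebra_simps\<close>)
    also have "\<dots> = (\<Sum>l\<le>n. real (n choose l) * P l x * (\<Sum>j\<le>length y. a (take j y) * P (n - l) (drop j y)))"
      by (subst sum.swap) (simp add: sum_distrib_left)
    also have "\<dots> = (\<Sum>l\<le>n. real (n choose l) * P l x * P (Suc n - l) y)"
    proof (intro sum.cong[OF refl])
      fix l assume "l \<in> {..n}"
      then have "Suc n - l = Suc (n - l)" by simp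
      then show "real (n choose l) * P l x * (\<Sum>j\<le>length y. a (take j y) * P (n - l) (drop j y)) =
          real (n choose l) * P l x * P (Suc n - l) y"
        by (simp add: P_def tmul_le[OF ly])
    qed
    finally show ?thesis .
  qed
  also have "(\<Sum>i\<le>length x. a (take i x) * sh (tpow k a n) (drop i x) y) =
       (\<Sum>l\<le>n. real (n choose l) * P (Suc l) x * P (n - l) y)"
  proof -
    have "(\<Sum>i\<le>length x. a (take i x) * sh (tpow k a n) (drop i x) y) =
        (\<Sum>i\<le>length x. \<Sum>l\<le>n. real (n choose l) * (a (take i x) * P l (drop i x)) * P (n - l) y)"
      by (intro sum.cong[OF refl]) (use xy in \<open>simp add: Suc.hyps sum_distrib_left P_def algebra_simps\<close>)
    also have "\<dots> = (\<Sum>l\<le>n. real (n choose l) * (\<Sum>i\<le>length x. a (take i x) * P l (drop i x)) * P (n - l) y)"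
      by (subst sum.swap) (simp add: sum_distrib_left sum_distrib_right)
    also have "\<dots> = (\<Sum>l\<le>n. real (n choose l) * P (Suc l) x * P (n - l) y)"
      by (simp add: P_def tmul_le[OF lx])
    finally show ?thesis .
  qed
  finally show ?case
    using pascal_sum[where f="\<lambda>l. P l x" and g="\<lambda>l. P l y" and n=n] by (simp add: P_def)
qed

lemma lo_tpow_apply: "lo 1 a \<Longrightarrow> length w < l \<Longrightarrow> tpow k a l w = 0"
  using lo_tpow[of a l k] by (simp add: lo_def)

lemma texp_nil: "lo 1 a \<Longrightarrow> texp k a [] = 1"
proof -
  assume a: "lo 1 a"
  have "texp k a [] = (\<Sum>l\<le>k. if l = 0 then 1 else 0)"
    unfolding texp_def
  proof (rule sum.cong[OF refl])
    fix l show "1 / fact l * tpow k a l [] = (if l = 0 then 1 else 0)"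
      using lo_tpow_apply[OF a, of "[]" l k] by (cases l) (auto simp: tone_def)
  qed
  then show ?thesis by simp
qed

lemma glike_texp:
  assumes a: "prim k a"
  shows "glike k (texp k a)"
  unfolding glike_def
proof (intro conjI allI impI)
  have a1: "lo 1 a" using a by (simp add: prim_def)
  show "texp k a [] = 1" by (rule texp_nil[OF a1])
  fix x y :: "nat list" assume xy: "length x + length y \<le> k"
  define F where "F l = tpow k a l x / fact l" for l
  define G where "G l = tpow k a l y / fact l" for l
  have "sh (texp k a) x y = (\<Sum>n\<le>k. 1 / fact n * sh (tpow k a n) x y)"
    unfolding texp_def sh_sum sh_scale ..
  also have "\<dots> = (\<Sum>n\<le>k. \<Sum>l\<le>n. F l * G (n - l))"
  proof (rule sum.cong[OF refl])
    fix n
    have "1 / fact n * sh (tpow k a n) x y = (\<Sum>l\<le>n. 1 / fact n * (real (n choose l) * tpow k a l x * tpow k a (n - l) y))"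
      by (simp add: sh_tpow_prim[OF a xy] sum_distrib_left)
    also have "\<dots> = (\<Sum>l\<le>n. F l * G (n - l))"
    proof (rule sum.cong[OF refl])
      fix l assume "l \<in> {..n}"
      then have "real (n choose l) = fact n / (fact l * fact (n - l))" by (simp add: binomial_fact)
      then show "1 / fact n * (real (n choose l) * tpow k a l x * tpow k a (n - l) y) = F l * G (n - l)"
        by (simp add: F_def G_def field_simps)
    qed
    finally show "1 / fact n * sh (tpow k a n) x y = (\<Sum>l\<le>n. F l * G (n - l))" .
  qed
  also have "\<dots> = (\<Sum>(l,m)\<in>{(l,m). l + m \<le> k}. F l * G m)"
    by (rule sum.triangle_reindex_eq[symmetric])
  also have "\<dots> = (\<Sum>(l,m)\<in>{..k} \<times> {..k}. F l * G m)"
  proof (rule sum.mono_neutral_left)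
    show "\<forall>i\<in>{..k} \<times> {..k} - {(l, m). l + m \<le> k}. (case i of (l, m) \<Rightarrow> F l * G m) = 0"
    proof
      fix i assume "i \<in> {..k} \<times> {..k} - {(l, m). l + m \<le> k}"
      then obtain l m where i: "i = (l, m)" "k < l + m" by auto
      show "(case i of (l, m) \<Rightarrow> F l * G m) = 0"
      proof (cases "length x < l")
        case True then show ?thesis using i lo_tpow_apply[OF a1 True] by (simp add: F_def)
      next
        case False
        then have "length y < m" using i xy by simp
        then show ?thesis using i lo_tpow_apply[OF a1] by (simp add: G_def)
      qed
    qed
  qed auto
  also have "\<dots> = (\<Sum>l\<le>k. F l) * (\<Sum>m\<le>k. G m)"
    by (simp add: sum_product sum.cartesian_product)
  also have "\<dots> = texp k a x * texp k a y"
    by (simp add: texp_def F_def G_def)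
  finally show "sh (texp k a) x y = texp k a x * texp k a y" .
qed

lemma tpow_scale: "tpow k (tscale t c) l = tscale (t ^ l) (tpow k c l)"
proof (induct l)
  case 0 then show ?case by (simp add: tscale_def)
next
  case (Suc l)
  then show ?case by (simp add: tscale_def tmul_scale_left tmul_scale_right mult.assoc)
qed

lemma poly_nat_roots_zero:
  fixes P :: "real poly"
  assumes "\<And>n::nat. poly P (real n) = 0"
  shows "P = 0"
proof (rule ccontr)
  assume "P \<noteq> 0"
  then have "finite {t. poly P t = 0}" by (rule poly_roots_finite)
  moreover have "range real \<subseteq> {t. poly P t = 0}" using assms by auto
  ultimately have "finite (range (real :: nat \<Rightarrow> real))" by (rule finite_subset[rotated])
  moreover have "infinite (range (real :: nat \<Rightarrow> real))"
    by (rule range_inj_infinite) (simp add: inj_on_def)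
  ultimately show False by simp
qed

lemma prim_tlog:
  assumes k: "1 \<le> k" and g: "glike k g" and gc: "tclean k g"
  shows "prim k (tlog k g)"
proof -
  define c where "c = tlog k g"
  have g0: "g [] = 1" using g by (simp add: glike_def)
  have lz: "lo 1 (tsub g tone)" using g0 by (simp add: tsub_def tone_def)
  have c1: "lo 1 c" unfolding c_def tlog_ev by (rule ev_lo1[OF lz]) simp
  have cc: "tclean k c" unfolding c_def tlog_ev by simp
  have ge: "texp k c = g" unfolding c_def by (rule texp_tlog[OF k g0 gc])
  have gl: "glike k (texp k (tscale (real n) c))" for n
    using glike_tpow[OF g, of n] tpow_texp[OF k c1 cc, of n] ge by simp
  have te: "texp k (tscale t c) w = (\<Sum>l\<le>k. 1 / fact l * (t ^ l * tpow k c l w))" for t w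
    unfolding texp_def tpow_scale by (simp add: tscale_def)
  show "prim k c"
    unfolding prim_def
  proof (intro conjI allI impI)
    show "c [] = 0" using c1 by simp
    fix x y :: "nat list" assume x: "x \<noteq> []" and y: "y \<noteq> []" and xy: "length x + length y \<le> k"
    define A where "A = (\<Sum>l\<le>k. monom (sh (tpow k c l) x y / fact l) l)"
    define B where "B = (\<Sum>l\<le>k. monom (tpow k c l x / fact l) l)"
    define C where "C = (\<Sum>l\<le>k. monom (tpow k c l y / fact l) l)"
    have pe: "poly (A - B * C) (real n) = 0" for n
    proof -
      have "sh (texp k (tscale (real n) c)) x y = texp k (tscale (real n) c) x * texp k (tscale (real n) c) y"
        using gl[of n] xy by (simp add: glike_def)
      moreover have "sh (texp k (tscale (real n) c)) x y = poly A (real n)"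
        unfolding te sh_sum sh_scale A_def by (simp add: poly_sum poly_monom sh_scale field_simps)
      moreover have "texp k (tscale (real n) c) x = poly B (real n)" "texp k (tscale (real n) c) y = poly C (real n)"
        unfolding te B_def C_def by (simp_all add: poly_sum poly_monom field_simps)
      ultimately show ?thesis by simp
    qed
    have "A - B * C = 0" by (rule poly_nat_roots_zero) (rule pe)
    then have "coeff (A - B * C) 1 = 0" by simp
    moreover have "coeff A 1 = sh c x y"
      using k cc by (simp add: A_def coeff_sum tmul_tone_right)
    moreover have "coeff B 0 = 0" "coeff C 0 = 0"
      using x y by (simp_all add: B_def C_def coeff_sum tone_def)
    moreover have "coeff (B * C) 1 = coeff B 0 * coeff C 1 + coeff B 1 * coeff C 0"
      by (simp add: coeff_mult)
    ultimately show "sh c x y = 0" by simp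
  qed
qed


fun sel :: "bool list \<Rightarrow> 'a list \<Rightarrow> 'a list" where
  "sel [] w = []"
| "sel (b # m) [] = []"
| "sel (b # m) (a # w) = (if b then a # sel m w else sel m w)"

fun Rb :: "nat \<Rightarrow> nat list \<Rightarrow> tensor" where
  "Rb k [] = tzero"
| "Rb k [a] = basis_vec a"
| "Rb k (a # b # v) = tbracket k (basis_vec a) (Rb k (b # v))"

definition ew :: "nat list \<Rightarrow> tensor" where "ew w = (\<lambda>u. if u = w then 1 else 0)"

lemma basis_ew: "basis_vec a = ew [a]"
  by (simp add: basis_vec_def ew_def)

lemma tmul_ew: "length (u @ v) \<le> k \<Longrightarrow> tmul k (ew u) (ew v) = ew (u @ v)"
proof (rule ext)
  fix w assume l: "length (u @ v) \<le> k"
  show "tmul k (ew u) (ew v) w = ew (u @ v) w"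
  proof (cases "length w \<le> k")
    case True
    have "tmul k (ew u) (ew v) w = (\<Sum>i\<le>length w. if i = length u \<and> w = u @ v then 1 else 0)"
      unfolding tmul_le[OF True]
    proof (rule sum.cong[OF refl])
      fix i assume "i \<in> {..length w}"
      then have iw: "i \<le> length w" by simp
      have iff: "(take i w = u \<and> drop i w = v) \<longleftrightarrow> (i = length u \<and> w = u @ v)"
      proof
        assume h: "take i w = u \<and> drop i w = v"
        then have "length u = i" using iw by auto
        moreover have "w = u @ v" using h by (metis append_take_drop_id)
        ultimately show "i = length u \<and> w = u @ v" by simp
      qed auto
      show "ew u (take i w) * ew v (drop i w) = (if i = length u \<and> w = u @ v then 1 else 0)"
        unfolding ew_def iff[symmetric] by simp
    qed
    also have "\<dots> = ew (u @ v) w"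
      by (auto simp: ew_def sum.If_cases)
    finally show ?thesis .
  next
    case False
    then have "w \<noteq> u @ v" using l by auto
    then show ?thesis using False by (simp add: tmul_def ew_def)
  qed
qed

lemma Rb_Cons: "Rb k (a # u) = (if u = [] then basis_vec a else tbracket k (basis_vec a) (Rb k u))"
  by (cases u) auto

lemma Rb_clean: "1 \<le> k \<Longrightarrow> tclean k (Rb k w)"
proof (induct w rule: Rb.induct)
  case (1 k) then show ?case by (simp add: tclean_def tzero_def)
next
  case (2 k a) then show ?case by (auto simp: tclean_def basis_vec_def)
next
  case (3 k a b v) then show ?case by (simp add: tclean_def tbracket_def tsub_def tmul_def)
qed

lemma sel_nil_iff: "length m = length v \<Longrightarrow> sel m v = [] \<longleftrightarrow> m = replicate (length v) False"
proof (induct m v rule: sel.induct)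
  case (3 b m a w) then show ?case by auto
qed auto

lemma sel_not_false: "length m = length v \<Longrightarrow> m = replicate (length v) False \<Longrightarrow> sel (map Not m) v = v"
proof (induct m v rule: sel.induct)
  case (3 b m a w) then show ?case by auto
qed auto

lemma sel_length: "length (sel m w) \<le> length w"
  by (induct m w rule: sel.induct) auto

lemma sum_len_Suc:
  "(\<Sum>m\<in>{m::bool list. length m = Suc n}. f m) = (\<Sum>m\<in>{m. length m = n}. f (True # m) + f (False # m))"
proof -
  have e: "{m::bool list. length m = Suc n} = (\<lambda>(b, m). b # m) ` (UNIV \<times> {m. length m = n})"
    by (auto simp: length_Suc_conv image_iff)
  have i: "inj_on (\<lambda>(b, m). b # m) (UNIV \<times> {m::bool list. length m = n})"
    by (auto simp: inj_on_def)
  have fin: "finite {m::bool list. length m = n}"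
    using finite_lists_length_eq[of "UNIV :: bool set" n] by simp
  have "(\<Sum>m\<in>{m::bool list. length m = Suc n}. f m) = (\<Sum>(b,m)\<in>UNIV \<times> {m. length m = n}. f (b # m))"
    unfolding e by (subst sum.reindex[OF i]) (simp add: split_def)
  also have "\<dots> = (\<Sum>b\<in>UNIV. \<Sum>m\<in>{m. length m = n}. f (b # m))"
    by (simp add: sum.cartesian_product)
  also have "\<dots> = (\<Sum>m\<in>{m. length m = n}. f (True # m) + f (False # m))"
    by (simp add: UNIV_bool sum.distrib add.commute)
  finally show ?thesis .
qed

lemma finite_len[simp]: "finite {m::bool list. length m = n}"
  using finite_lists_length_eq[of "UNIV :: bool set" n] by simp

lemma dsw_core:
  assumes k: "1 \<le> k"
  shows "length w \<le> k \<Longrightarrow>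
    (\<lambda>u. \<Sum>m\<in>{m. length m = length w}. tmul k (Rb k (sel m w)) (ew (sel (map Not m) w)) u)
     = (\<lambda>u. real (length w) * ew w u)"
proof (induct w)
  case Nil
  have "{m::bool list. length m = 0} = {[]}" by auto
  then show ?case by (simp add: tzero_def tmul_zero_left)
next
  case (Cons a v)
  define n where "n = length v"
  have lv: "length v \<le> k" using Cons.prems by simp
  define T where "T m = tmul k (Rb k (sel m v)) (ew (sel (map Not m) v))" for m
  have step: "tmul k (Rb k (a # sel m v)) (ew (sel (map Not m) v)) u
      + tmul k (Rb k (sel m v)) (ew (a # sel (map Not m) v)) u
      = (if sel m v = [] then ew (a # v) u else 0) + tmul k (basis_vec a) (T m) u"
    if m: "length m = length v" for m u
  proof -
    define x where "x = sel m v"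
    define y where "y = sel (map Not m) v"
    have ly: "length (a # y) \<le> k" using sel_length[of "map Not m" v] Cons.prems by (simp add: y_def)
    have ea: "tmul k (basis_vec a) (ew y) = ew (a # y)"
      using tmul_ew[of "[a]" y k] ly by (simp add: basis_ew)
    show ?thesis
    proof (cases "x = []")
      case True
      then have "m = replicate (length v) False" using sel_nil_iff[of m v] m by (simp add: x_def)
      then have "y = v" using sel_not_false[of m v] m by (simp add: y_def)
      then show ?thesis using True ea
        by (simp add: x_def[symmetric] y_def[symmetric] T_def tzero_def tmul_zero_left tmul_zero_right)
    next
      case False
      have "tmul k (Rb k (a # x)) (ew y) = (\<lambda>u. tmul k (basis_vec a) (tmul k (Rb k x) (ew y)) u
            - tmul k (tmul k (Rb k x) (basis_vec a)) (ew y) u)"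
        using False by (simp add: Rb_Cons tbracket_def tsub_def tmul_diff_left tmul_assoc)
      moreover have "tmul k (Rb k x) (ew (a # y)) = tmul k (tmul k (Rb k x) (basis_vec a)) (ew y)"
        by (simp add: ea[symmetric] tmul_assoc)
      ultimately show ?thesis using False
        by (simp add: x_def[symmetric] y_def[symmetric] T_def)
    qed
  qed
  have "(\<lambda>u. \<Sum>m\<in>{m. length m = length (a # v)}. tmul k (Rb k (sel m (a # v))) (ew (sel (map Not m) (a # v))) u)
      = (\<lambda>u. \<Sum>m\<in>{m. length m = n}. (if sel m v = [] then ew (a # v) u else 0) + tmul k (basis_vec a) (T m) u)"
    by (simp add: sum_len_Suc n_def step)
  also have "\<dots> = (\<lambda>u. (\<Sum>m\<in>{m. length m = n}. if m = replicate n False then ew (a # v) u else 0)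
        + tmul k (basis_vec a) (\<lambda>u. \<Sum>m\<in>{m. length m = n}. T m u) u)"
  proof -
    have "(\<Sum>m\<in>{m. length m = length v}. if sel m v = [] then X else 0)
        = (\<Sum>m\<in>{m. length m = length v}. if m = replicate (length v) False then X else 0)" for X :: real
      by (rule sum.cong) (auto simp: sel_nil_iff)
    then show ?thesis by (simp add: sum.distrib tmul_sum_right n_def)
  qed
  also have "(\<lambda>u. \<Sum>m\<in>{m. length m = n}. T m u) = (\<lambda>u. real n * ew v u)"
    using Cons.hyps[OF lv] by (simp add: T_def n_def)
  also have "tmul k (basis_vec a) (\<lambda>u. real n * ew v u) = (\<lambda>u. real n * ew (a # v) u)"
    using tmul_ew[of "[a]" v k] Cons.prems by (simp add: tmul_scale_right basis_ew)
  finally show ?case by (simp add: n_def algebra_simps)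
qed

definition Wd :: "nat \<Rightarrow> nat \<Rightarrow> nat list set" where
  "Wd d n = {w. length w = n \<and> set w \<subseteq> {..<d}}"

lemma finite_Wd[simp]: "finite (Wd d n)"
  unfolding Wd_def using finite_lists_length_eq[of "{..<d}" n] by (simp add: conj_commute)

lemma sel_merge:
  "length m = length x + length y \<Longrightarrow> cnt m = length x \<Longrightarrow> sel m (merge m x y) = x"
  "length m = length x + length y \<Longrightarrow> cnt m = length x \<Longrightarrow> sel (map Not m) (merge m x y) = y"
proof (induct m arbitrary: x y)
  case Nil
  { case 1 then show ?case by simp }
  { case 2 then show ?case by simp }
next
  case (Cons b m)
  { case 1
    show ?case
    proof (cases b)
      case True
      with 1 obtain x0 x' where "x = x0 # x'" by (cases x) auto
      then show ?thesis using Cons.hyps(1)[of x' y] 1 True by auto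
    next
      case False
      with 1 obtain y0 y' where "y = y0 # y'" using cnt_le[of m] by (cases y) auto
      then show ?thesis using Cons.hyps(1)[of x y'] 1 False by auto
    qed }
  { case 2
    show ?case
    proof (cases b)
      case True
      with 2 obtain x0 x' where "x = x0 # x'" by (cases x) auto
      then show ?thesis using Cons.hyps(2)[of x' y] 2 True by auto
    next
      case False
      with 2 obtain y0 y' where "y = y0 # y'" using cnt_le[of m] by (cases y) auto
      then show ?thesis using Cons.hyps(2)[of x y'] 2 False by auto
    qed }
qed

lemma cnt_map_Not: "cnt (map Not m) = length m - cnt m"
proof (induct m)
  case (Cons a m)
  have "cnt m \<le> length m" by (rule cnt_le)
  then show ?case using Cons by (cases a) (auto simp: Suc_diff_le)
qed simp

lemma merge_sel: "length m = length w \<Longrightarrow> merge m (sel m w) (sel (map Not m) w) = w"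
proof (induct m w rule: sel.induct)
  case (3 b m a w) then show ?case by (cases b) auto
qed auto

lemma length_sel: "length m = length w \<Longrightarrow> length (sel m w) = cnt m"
  by (induct m w rule: sel.induct) auto

lemma length_sel_not: "length m = length w \<Longrightarrow> length (sel (map Not m) w) = length m - cnt m"
proof (induct m w rule: sel.induct)
  case (3 b m a w)
  have "cnt m \<le> length m" by (rule cnt_le)
  then show ?case using 3 by auto
qed auto

lemma set_sel: "set (sel m w) \<subseteq> set w"
  by (induct m w rule: sel.induct) auto

lemma set_merge: "length m = length x + length y \<Longrightarrow> cnt m = length x \<Longrightarrow> set (merge m x y) \<subseteq> set x \<union> set y"
proof (induct m arbitrary: x y)
  case (Cons b m)
  show ?case
  proof (cases b)
    case True
    with Cons obtain x0 x' where "x = x0 # x'" by (cases x) auto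
    then show ?thesis using Cons.hyps[of x' y] Cons.prems True by auto
  next
    case False
    with Cons obtain y0 y' where "y = y0 # y'" using cnt_le[of m] by (cases y) auto
    then show ?thesis using Cons.hyps[of x y'] Cons.prems False by auto
  qed
qed simp

lemma sum_Wd_bij:
  assumes m: "m \<in> masks i j"
  shows "(\<Sum>w\<in>Wd d (i + j). f (sel m w) (sel (map Not m) w) w)
       = (\<Sum>(x,y)\<in>Wd d i \<times> Wd d j. f x y (merge m x y))"
proof (rule sum.reindex_bij_witness[where i = "\<lambda>(x,y). merge m x y" and j = "\<lambda>w. (sel m w, sel (map Not m) w)"], goal_cases)
  case (1 w)
  then show ?case using m by (auto simp: masks_def Wd_def merge_sel)
next
  case (2 w)
  then have lw: "length m = length w" using m by (simp add: masks_def Wd_def)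
  show ?case using 2 m lw set_sel[of m w] set_sel[of "map Not m" w]
    by (auto simp: masks_def Wd_def length_sel length_sel_not cnt_map_Not)
next
  case (3 b)
  then obtain x y where b: "b = (x, y)" "x \<in> Wd d i" "y \<in> Wd d j" by auto
  then show ?case using m sel_merge[of m x y] by (auto simp: masks_def Wd_def)
next
  case (4 b)
  then obtain x y where b: "b = (x, y)" "x \<in> Wd d i" "y \<in> Wd d j" by auto
  then show ?case using m set_merge[of m x y] by (auto simp: masks_def Wd_def)
next
  case (5 w)
  then have "length m = length w" using m by (simp add: masks_def Wd_def)
  then show ?case by (simp add: merge_sel)
qed

lemma sum_len_cnt:
  "(\<Sum>m\<in>{m::bool list. length m = n}. f m) = (\<Sum>i\<le>n. \<Sum>m\<in>masks i (n - i). f m)"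
proof -
  have "(\<Sum>i\<le>n. \<Sum>m\<in>{m\<in>{m::bool list. length m = n}. cnt m = i}. f m) = (\<Sum>m\<in>{m::bool list. length m = n}. f m)"
    by (rule sum.group) (auto simp: cnt_le)
  moreover have "{m\<in>{m::bool list. length m = n}. cnt m = i} = masks i (n - i)" if "i \<le> n" for i
    using that cnt_le by (auto simp: masks_def)
  ultimately show ?thesis by simp
qed

lemma Wd_0: "Wd d 0 = {[]}"
  by (auto simp: Wd_def)

lemma ew_nil: "ew [] = tone"
  by (simp add: ew_def tone_def fun_eq_iff)

lemma dsw_hom:
  assumes k: "1 \<le> k" and p: "prim k p" and pt: "p \<in> tensors d k"
    and hom: "\<And>w. p w \<noteq> 0 \<Longrightarrow> length w = n" and n1: "1 \<le> n" and nk: "n \<le> k"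
  shows "(\<lambda>u. \<Sum>w\<in>Wd d n. p w * Rb k w u) = (\<lambda>u. real n * p u)"
proof (rule ext)
  fix u
  define Tt where "Tt x y = tmul k (Rb k x) (ew y) u" for x y
  have supp: "w \<in> Wd d n" if "p w \<noteq> 0" for w
    using that pt hom[OF that] by (auto simp: tensors_def Wd_def)
  have "real n * p u = (\<Sum>w\<in>Wd d n. p w * (real n * ew w u))"
  proof -
    have "(\<Sum>w\<in>Wd d n. p w * (real n * ew w u)) = (\<Sum>w\<in>Wd d n. if w = u then real n * p u else 0)"
      by (rule sum.cong) (auto simp: ew_def)
    also have "\<dots> = real n * p u"
      using supp[of u] by (auto simp: sum.delta)
    finally show ?thesis by simp
  qed
  also have "\<dots> = (\<Sum>w\<in>Wd d n. p w * (\<Sum>m\<in>{m. length m = n}. Tt (sel m w) (sel (map Not m) w)))"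
  proof (rule sum.cong[OF refl])
    fix w assume w: "w \<in> Wd d n"
    then have lw: "length w = n" by (simp add: Wd_def)
    have "(\<lambda>u. \<Sum>m\<in>{m. length m = length w}. tmul k (Rb k (sel m w)) (ew (sel (map Not m) w)) u)
     = (\<lambda>u. real (length w) * ew w u)"
      using dsw_core[OF k, of w] lw nk by simp
    then have "real n * ew w u = (\<Sum>m\<in>{m. length m = n}. Tt (sel m w) (sel (map Not m) w))"
      using lw by (simp add: Tt_def fun_eq_iff)
    then show "p w * (real n * ew w u) = p w * (\<Sum>m\<in>{m. length m = n}. Tt (sel m w) (sel (map Not m) w))"
      by simp
  qed
  also have "\<dots> = (\<Sum>m\<in>{m. length m = n}. \<Sum>w\<in>Wd d n. p w * Tt (sel m w) (sel (map Not m) w))"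
    by (simp add: sum_distrib_left) (rule sum.swap)
  also have "\<dots> = (\<Sum>i\<le>n. \<Sum>m\<in>masks i (n - i). \<Sum>w\<in>Wd d n. p w * Tt (sel m w) (sel (map Not m) w))"
    by (rule sum_len_cnt)
  also have "\<dots> = (\<Sum>i\<le>n. \<Sum>m\<in>masks i (n - i). \<Sum>(x,y)\<in>Wd d i \<times> Wd d (n - i). p (merge m x y) * Tt x y)"
  proof (intro sum.cong[OF refl])
    fix i m assume i: "i \<in> {..n}" and m: "m \<in> masks i (n - i)"
    have "Wd d n = Wd d (i + (n - i))" using i by simp
    then show "(\<Sum>w\<in>Wd d n. p w * Tt (sel m w) (sel (map Not m) w)) =
        (\<Sum>(x,y)\<in>Wd d i \<times> Wd d (n - i). p (merge m x y) * Tt x y)"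
      using sum_Wd_bij[OF m, where d=d and f="\<lambda>x y w. p w * Tt x y"] by simp
  qed
  also have "\<dots> = (\<Sum>i\<le>n. \<Sum>(x,y)\<in>Wd d i \<times> Wd d (n - i). sh p x y * Tt x y)"
  proof (rule sum.cong[OF refl])
    fix i assume i: "i \<in> {..n}"
    have "(\<Sum>m\<in>masks i (n - i). \<Sum>(x,y)\<in>Wd d i \<times> Wd d (n - i). p (merge m x y) * Tt x y)
        = (\<Sum>(x,y)\<in>Wd d i \<times> Wd d (n - i). \<Sum>m\<in>masks i (n - i). p (merge m x y) * Tt x y)"
      unfolding split_def by (rule sum.swap)
    also have "\<dots> = (\<Sum>(x,y)\<in>Wd d i \<times> Wd d (n - i). sh p x y * Tt x y)"
      by (rule sum.cong[OF refl]) (auto simp: sh_def Wd_def sum_distrib_right)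
    finally show "(\<Sum>m\<in>masks i (n - i). \<Sum>(x,y)\<in>Wd d i \<times> Wd d (n - i). p (merge m x y) * Tt x y)
        = (\<Sum>(x,y)\<in>Wd d i \<times> Wd d (n - i). sh p x y * Tt x y)" .
  qed
  also have "\<dots> = (\<Sum>i\<le>n. if i = n then (\<Sum>x\<in>Wd d n. p x * Rb k x u) else 0)"
  proof (rule sum.cong[OF refl])
    fix i assume i: "i \<in> {..n}"
    show "(\<Sum>(x,y)\<in>Wd d i \<times> Wd d (n - i). sh p x y * Tt x y) = (if i = n then (\<Sum>x\<in>Wd d n. p x * Rb k x u) else 0)"
    proof (cases "i = n")
      case True
      have "(\<Sum>(x,y)\<in>Wd d i \<times> Wd d (n - i). sh p x y * Tt x y) = (\<Sum>x\<in>Wd d n. sh p x [] * Tt x [])"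
        using True by (simp add: Wd_0 sum.cartesian_product[symmetric])
      also have "\<dots> = (\<Sum>x\<in>Wd d n. p x * Rb k x u)"
        using Rb_clean[OF k] by (simp add: Tt_def ew_nil tmul_tone_right)
      finally show ?thesis using True by simp
    next
      case False
      have "(\<Sum>(x,y)\<in>Wd d i \<times> Wd d (n - i). sh p x y * Tt x y) = 0"
      proof (rule sum.neutral, rule ballI)
        fix xy assume xy: "xy \<in> Wd d i \<times> Wd d (n - i)"
        then obtain x y where e: "xy = (x, y)" "length x = i" "length y = n - i" by (auto simp: Wd_def)
        show "(case xy of (x, y) \<Rightarrow> sh p x y * Tt x y) = 0"
        proof (cases "x = []")
          case True then show ?thesis using e by (simp add: Tt_def tzero_def tmul_zero_left)
        next
          case xn: False
          have "y \<noteq> []" using e False i by auto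
          moreover have "length x + length y \<le> k" using e i nk by simp
          ultimately show ?thesis using p xn e by (simp add: prim_def)
        qed
      qed
      then show ?thesis using False by simp
    qed
  qed
  also have "\<dots> = (\<Sum>x\<in>Wd d n. p x * Rb k x u)"
    by (simp add: sum.delta)
  finally show "(\<Sum>w\<in>Wd d n. p w * Rb k w u) = real n * p u" by simp
qed

lemma lie_sum: "finite S \<Longrightarrow> (\<And>i. i \<in> S \<Longrightarrow> f i \<in> lie_alg d k) \<Longrightarrow> (\<lambda>w. \<Sum>i\<in>S. f i w) \<in> lie_alg d k"
proof (induct S rule: finite_induct)
  case empty
  then show ?case using lie_alg.zero[of d k] by (simp add: tzero_def)
next
  case (insert x F)
  then have "tadd (f x) (\<lambda>w. \<Sum>i\<in>F. f i w) \<in> lie_alg d k" by (simp add: lie_alg.add)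
  then show ?case using insert by (simp add: tadd_def)
qed

lemma lie_scale: "a \<in> lie_alg d k \<Longrightarrow> (\<lambda>w. c * a w) \<in> lie_alg d k"
  using lie_alg.scale[of a d k c] by (simp add: tscale_def)

lemma Rb_lie: "set w \<subseteq> {..<d} \<Longrightarrow> Rb k w \<in> lie_alg d k"
proof (induct k w rule: Rb.induct)
  case (1 k) then show ?case by (simp add: lie_alg.zero)
next
  case (2 k a) then show ?case by (simp add: lie_alg.gen)
next
  case (3 k a b v) then show ?case by (simp add: lie_alg.gen lie_alg.bracket)
qed

lemma prim_lie:
  assumes k: "1 \<le> k" and p: "prim k p" and pt: "p \<in> tensors d k"
  shows "p \<in> lie_alg d k"
proof -
  define h where "h n = (\<lambda>w. if length w = n then p w else 0)" for n
  have hl: "h n \<in> lie_alg d k" if n: "n \<in> {1..k}" for n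
  proof -
    have hp: "prim k (h n)"
      unfolding prim_def
    proof (intro conjI allI impI)
      show "h n [] = 0" using n by (simp add: h_def)
      fix x y :: "nat list" assume "x \<noteq> []" "y \<noteq> []" "length x + length y \<le> k"
      then have "sh p x y = 0" using p by (simp add: prim_def)
      moreover have "sh (h n) x y = (if length x + length y = n then sh p x y else 0)"
      proof -
        have "sh (h n) x y = (\<Sum>m\<in>masks (length x) (length y). if length x + length y = n then p (merge m x y) else 0)"
          unfolding sh_def h_def by (rule sum.cong) (auto simp: masks_def)
        then show ?thesis by (cases "length x + length y = n") (simp_all add: sh_def)
      qed
      ultimately show "sh (h n) x y = 0" by simp
    qed
    have ht: "h n \<in> tensors d k" using pt by (auto simp: tensors_def h_def)
    have "(\<lambda>u. \<Sum>w\<in>Wd d n. h n w * Rb k w u) = (\<lambda>u. real n * h n u)"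
      by (rule dsw_hom[OF k hp ht]) (use n in \<open>auto simp: h_def split: if_splits\<close>)
    moreover have "(\<lambda>u. \<Sum>w\<in>Wd d n. h n w * Rb k w u) \<in> lie_alg d k"
      by (rule lie_sum[OF finite_Wd]) (auto simp: Wd_def intro: lie_scale[of _ d k] Rb_lie)
    ultimately have "(\<lambda>u. real n * h n u) \<in> lie_alg d k" by simp
    then have "(\<lambda>u. (1 / real n) * (real n * h n u)) \<in> lie_alg d k" by (rule lie_scale)
    then show ?thesis using n by simp
  qed
  have "p = (\<lambda>w. \<Sum>n\<in>{1..k}. h n w)"
  proof (rule ext)
    fix w
    have "(\<Sum>n\<in>{1..k}. h n w) = (\<Sum>n\<in>{1..k}. if n = length w then p w else 0)"
      by (rule sum.cong) (auto simp: h_def)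
    also have "\<dots> = (if length w \<in> {1..k} then p w else 0)" by (simp add: sum.delta)
    also have "\<dots> = p w"
    proof -
      have "p [] = 0" using p by (simp add: prim_def)
      moreover have "k < length w \<Longrightarrow> p w = 0" using pt by (auto simp: tensors_def)
      ultimately show ?thesis by (cases w) auto
    qed
    finally show "p w = (\<Sum>n\<in>{1..k}. h n w)" by simp
  qed
  also have "\<dots> \<in> lie_alg d k" by (rule lie_sum) (auto intro: hl)
  finally show ?thesis .
qed


unbundle fps_syntax

lemma tensors_tone: "tone \<in> tensors d k"
  by (simp add: tensors_def tone_def)

lemma tensors_tpow: "z \<in> tensors d k \<Longrightarrow> tpow k z n \<in> tensors d k"
  by (induct n) (simp_all add: tensors_tone tensors_tmul)

lemma tensors_ev: "z \<in> tensors d k \<Longrightarrow> ev k z f \<in> tensors d k"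
  unfolding ev_def by (rule tensors_sum) (auto intro: tensors_scale tensors_tpow)

lemma tensors_tsub1: "s \<in> tensors d k \<Longrightarrow> tsub s tone \<in> tensors d k"
  unfolding tsub_def by (rule tensors_diff[OF _ tensors_tone])

lemma tensors_tsub2: "s \<in> tensors d k \<Longrightarrow> tsub tone s \<in> tensors d k"
  unfolding tsub_def by (rule tensors_diff[OF tensors_tone])

lemma tensors_texp: "z \<in> tensors d k \<Longrightarrow> texp k z \<in> tensors d k"
  by (simp add: texp_ev tensors_ev)

lemma tensors_tlog: "s \<in> tensors d k \<Longrightarrow> tlog k s \<in> tensors d k"
  by (simp add: tlog_ev tensors_ev tensors_tsub1)

lemma tensors_tinv: "s \<in> tensors d k \<Longrightarrow> tinv k s \<in> tensors d k"
  by (simp add: tinv_ev tensors_ev tensors_tsub2)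

lemma tensors_clean: "z \<in> tensors d k \<Longrightarrow> tclean k z"
  by (auto simp: tensors_def tclean_def)

lemma lie_lo1: "z \<in> lie_alg d k \<Longrightarrow> lo 1 z"
  using lie_prim[of z d k] by (simp add: prim_def)

lemma lie_clean: "1 \<le> k \<Longrightarrow> z \<in> lie_alg d k \<Longrightarrow> tclean k z"
  by (rule tensors_clean[OF lie_tensors])

lemma lie_neg: "z \<in> lie_alg d k \<Longrightarrow> tscale (-1) z \<in> lie_alg d k"
  by (rule lie_alg.scale)

lemma bch:
  assumes k: "1 \<le> k" and a: "a \<in> lie_alg d k" and b: "b \<in> lie_alg d k"
  shows "tlog k (tmul k (texp k a) (texp k b)) \<in> lie_alg d k"
proof -
  have g: "glike k (tmul k (texp k a) (texp k b))"
    by (rule glike_tmul; rule glike_texp; rule lie_prim) (use a b in auto)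
  have t: "tmul k (texp k a) (texp k b) \<in> tensors d k"
    by (rule tensors_tmul; rule tensors_texp; rule lie_tensors[OF k]) (use a b in auto)
  show ?thesis
    by (rule prim_lie[OF k]) (auto intro: prim_tlog[OF k g] tensors_tlog[OF t])
qed

lemma grp_nil: "m \<in> grp d k \<Longrightarrow> m [] = 1"
  by (auto simp: grp_def intro: texp_nil lie_lo1)

lemma grp_clean: "m \<in> grp d k \<Longrightarrow> tclean k m"
  by (auto simp: grp_def texp_ev)

lemma grp_tensors: assumes k: "1 \<le> k" shows "m \<in> grp d k \<Longrightarrow> m \<in> tensors d k"
  by (auto simp: grp_def intro: tensors_texp lie_tensors[OF k])

lemma grp_texp: "a \<in> lie_alg d k \<Longrightarrow> texp k a \<in> grp d k"
  by (simp add: grp_def)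

lemma tlog_grp: assumes k: "1 \<le> k" and m: "m \<in> grp d k" shows "tlog k m \<in> lie_alg d k"
proof -
  obtain a where a: "a \<in> lie_alg d k" "m = texp k a" using m by (auto simp: grp_def)
  then show ?thesis using tlog_texp[OF k lie_lo1[OF a(1)] lie_clean[OF k a(1)]] by simp
qed

lemma texp_tlog_grp: assumes k: "1 \<le> k" and m: "m \<in> grp d k" shows "texp k (tlog k m) = m"
proof -
  obtain a where a: "a \<in> lie_alg d k" "m = texp k a" using m by (auto simp: grp_def)
  then show ?thesis using tlog_texp[OF k lie_lo1[OF a(1)] lie_clean[OF k a(1)]] by simp
qed

lemma grp_mul:
  assumes k: "1 \<le> k" and m: "m \<in> grp d k" and m': "m' \<in> grp d k"
  shows "tmul k m m' \<in> grp d k"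
proof -
  obtain a b where a: "a \<in> lie_alg d k" "m = texp k a" and b: "b \<in> lie_alg d k" "m' = texp k b"
    using m m' by (auto simp: grp_def)
  have l: "tlog k (tmul k m m') \<in> lie_alg d k" using bch[OF k a(1) b(1)] a b by simp
  have "(tmul k m m') [] = 1" using grp_nil[OF m] grp_nil[OF m'] by (simp add: tmul_def)
  then have "texp k (tlog k (tmul k m m')) = tmul k m m'"
    by (rule texp_tlog[OF k]) simp
  then show ?thesis using grp_texp[OF l] by simp
qed

lemma tinv_texp:
  assumes k: "1 \<le> k" and a1: "lo 1 a" and ac: "tclean k a"
  shows "tinv k (texp k a) = texp k (tscale (-1) a)"
proof -
  define m where "m = texp k a"
  define m' where "m' = texp k (tscale (-1) a)"
  have m0: "m [] = 1" using texp_nil[OF a1] by (simp add: m_def)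
  have mc: "tclean k m" by (simp add: m_def texp_ev)
  have m'c: "tclean k m'" by (simp add: m'_def texp_ev)
  have ic: "tclean k (tinv k m)" by (simp add: tinv_ev)
  have "tinv k m = tmul k (tinv k m) tone" using ic by (simp add: tmul_tone_right)
  also have "\<dots> = tmul k (tinv k m) (tmul k m m')"
    using texp_neg[OF k a1 ac] by (simp add: m_def m'_def)
  also have "\<dots> = tmul k (tmul k (tinv k m) m) m'" by (simp add: tmul_assoc)
  also have "\<dots> = m'" using tinv_mul(1)[OF k m0 mc] m'c by (simp add: tmul_tone_left)
  finally show ?thesis by (simp add: m_def m'_def)
qed

lemma grp_inv:
  assumes k: "1 \<le> k" and m: "m \<in> grp d k"
  shows "tinv k m \<in> grp d k"
proof -
  obtain a where a: "a \<in> lie_alg d k" "m = texp k a" using m by (auto simp: grp_def)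
  then show ?thesis using tinv_texp[OF k lie_lo1[OF a(1)] lie_clean[OF k a(1)]]
    by (simp add: grp_texp lie_neg)
qed

lemma lie_rel:
  assumes k: "1 \<le> k" and m: "m \<in> grp d k" and x: "x \<in> grp d k"
  shows "tlog k (tmul k (tinv k m) x) \<in> lie_alg d k"
  using tlog_grp[OF k grp_mul[OF k grp_inv[OF k m] x]] .


unbundle fps_syntax

definition eqto :: "nat \<Rightarrow> tensor \<Rightarrow> tensor \<Rightarrow> bool" where
  "eqto n f g \<longleftrightarrow> (\<forall>w. length w \<le> n \<longrightarrow> f w = g w)"

lemma eqto_refl[simp]: "eqto n f f" by (simp add: eqto_def)
lemma eqto_sym: "eqto n f g \<Longrightarrow> eqto n g f" by (simp add: eqto_def)
lemma eqto_trans: "eqto n f g \<Longrightarrow> eqto n g h \<Longrightarrow> eqto n f h" by (simp add: eqto_def)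
declare eqto_trans[trans]

lemma eqto_eq: "f = g \<Longrightarrow> eqto n f g" by simp

lemma eqto_tmul:
  assumes "eqto n a a'" "eqto n b b'"
  shows "eqto n (tmul k a b) (tmul k a' b')"
  unfolding eqto_def
proof (intro allI impI)
  fix w :: "nat list" assume w: "length w \<le> n"
  show "tmul k a b w = tmul k a' b' w"
  proof (cases "length w \<le> k")
    case True
    show ?thesis unfolding tmul_le[OF True]
      by (rule sum.cong[OF refl]) (use assms w in \<open>auto simp: eqto_def\<close>)
  qed (simp add: tmul_def)
qed

lemma eqto_tpow: "eqto n z z' \<Longrightarrow> eqto n (tpow k z l) (tpow k z' l)"
  by (induct l) (simp_all add: eqto_tmul)

lemma eqto_ev: "eqto n z z' \<Longrightarrow> eqto n (ev k z f) (ev k z' f)"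
  using eqto_tpow[of n z z' k] by (auto simp: eqto_def ev_def intro!: sum.cong)

lemma eqto_tsub: "eqto n a a' \<Longrightarrow> eqto n b b' \<Longrightarrow> eqto n (tsub a b) (tsub a' b')"
  by (simp add: eqto_def tsub_def)

lemma eqto_texp: "eqto n z z' \<Longrightarrow> eqto n (texp k z) (texp k z')"
  by (simp add: texp_ev eqto_ev)

lemma eqto_tlog: "eqto n z z' \<Longrightarrow> eqto n (tlog k z) (tlog k z')"
  by (simp add: tlog_ev eqto_ev eqto_tsub)

lemma eqto_tinv: "eqto n z z' \<Longrightarrow> eqto n (tinv k z) (tinv k z')"
  by (simp add: tinv_ev eqto_ev eqto_tsub)

lemma eqto_sum: "(\<And>i. i \<in> S \<Longrightarrow> eqto n (f i) (g i)) \<Longrightarrow> eqto n (\<lambda>w. \<Sum>i\<in>S. f i w) (\<lambda>w. \<Sum>i\<in>S. g i w)"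
  by (auto simp: eqto_def intro!: sum.cong)

lemma lo_eqto: "lo (Suc n) e \<Longrightarrow> eqto n (\<lambda>w. f w + e w) f"
  by (auto simp: eqto_def lo_def)

lemma pert_tpow:
  assumes a: "lo 1 a" and dl: "lo n \<delta>" and n: "1 \<le> n" and dc: "tclean k \<delta>"
  shows "eqto n (tpow k (\<lambda>w. a w + \<delta> w) l) (\<lambda>w. tpow k a l w + (if l = 1 then \<delta> w else 0))"
proof (induct l)
  case 0 then show ?case by simp
next
  case (Suc l)
  show ?case
  proof (cases "l = 0")
    case True
    have "tpow k (\<lambda>w. a w + \<delta> w) (Suc l) = (\<lambda>w. tpow k a (Suc l) w + \<delta> w)"
      using True dc by (auto simp: tmul_tone_right trunc_def tclean_def fun_eq_iff)
    then show ?thesis using True by simp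
  next
    case False
    then obtain l' where lS: "l = Suc l'" by (cases l) auto
    define T where "T = tpow k a l"
    define c where "c = (if l = 1 then 1 else (0::real))"
    have eqv: "(\<lambda>w. tpow k a l w + (if l = 1 then \<delta> w else 0)) = (\<lambda>w. T w + c * \<delta> w)"
      by (simp add: T_def c_def fun_eq_iff)
    have IH: "eqto n (tpow k (\<lambda>w. a w + \<delta> w) l) (\<lambda>w. T w + c * \<delta> w)"
      using Suc.hyps unfolding eqv .
    have "eqto n (tpow k (\<lambda>w. a w + \<delta> w) (Suc l)) (tmul k (\<lambda>w. a w + \<delta> w) (\<lambda>w. T w + c * \<delta> w))"
      using eqto_tmul[OF eqto_refl IH] by simp
    also have "tmul k (\<lambda>w. a w + \<delta> w) (\<lambda>w. T w + c * \<delta> w) =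
        (\<lambda>w. tmul k a T w + (c * tmul k a \<delta> w + tmul k \<delta> T w + c * tmul k \<delta> \<delta> w))"
      by (simp add: tmul_add_left tmul_add_right tmul_scale_right fun_eq_iff algebra_simps)
    also have "eqto n \<dots> (tmul k a T)"
    proof (rule lo_eqto)
      have l1: "lo (Suc n) (tmul k a \<delta>)" using lo_tmul[OF a dl, of k] by simp
      have "lo l T" unfolding T_def by (rule lo_tpow[OF a])
      then have "lo 1 T" using lS lo_mono[of l T 1] by simp
      then have l2: "lo (Suc n) (tmul k \<delta> T)" using lo_tmul[OF dl, of 1 T k] by simp
      have l3: "lo (Suc n) (tmul k \<delta> \<delta>)" using lo_tmul[OF dl dl, of k] n lo_mono by fastforce
      show "lo (Suc n) (\<lambda>w. c * tmul k a \<delta> w + tmul k \<delta> T w + c * tmul k \<delta> \<delta> w)"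
        using l1 l2 l3 by (simp add: lo_def)
    qed
    finally show ?thesis using lS by (simp add: T_def eqto_def)
  qed
qed

lemma pert_ev:
  assumes k: "1 \<le> k" and a: "lo 1 a" and dl: "lo n \<delta>" and n: "1 \<le> n" and dc: "tclean k \<delta>"
  shows "eqto n (ev k (\<lambda>w. a w + \<delta> w) f) (\<lambda>w. ev k a f w + f $ 1 * \<delta> w)"
  unfolding eqto_def
proof (intro allI impI)
  fix w :: "nat list" assume w: "length w \<le> n"
  have "ev k (\<lambda>w. a w + \<delta> w) f w = (\<Sum>l\<le>k. f $ l * (tpow k a l w + (if l = 1 then \<delta> w else 0)))"
    unfolding ev_def using pert_tpow[OF a dl n dc] w by (auto simp: eqto_def intro!: sum.cong)
  also have "\<dots> = ev k a f w + (\<Sum>l\<le>k. if l = 1 then f $ l * \<delta> w else 0)"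
    by (simp add: ev_def distrib_left sum.distrib if_distrib[of "\<lambda>x. _ * x"] cong: if_cong)
  also have "\<dots> = ev k a f w + f $ 1 * \<delta> w" using k by simp
  finally show "ev k (\<lambda>w. a w + \<delta> w) f w = ev k a f w + f $ 1 * \<delta> w" .
qed

lemma pert_texp:
  assumes k: "1 \<le> k" and a: "lo 1 a" and dl: "lo n \<delta>" and n: "1 \<le> n" and dc: "tclean k \<delta>"
  shows "eqto n (texp k (\<lambda>w. a w + \<delta> w)) (\<lambda>w. texp k a w + \<delta> w)"
  using pert_ev[OF k a dl n dc, of fE] by (simp add: texp_ev)

lemma pert_tlog:
  assumes k: "1 \<le> k" and s: "s [] = 1" and dl: "lo n \<delta>" and n: "1 \<le> n" and dc: "tclean k \<delta>"
  shows "eqto n (tlog k (\<lambda>w. s w + \<delta> w)) (\<lambda>w. tlog k s w + \<delta> w)"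
proof -
  have e: "tsub (\<lambda>w. s w + \<delta> w) tone = (\<lambda>w. tsub s tone w + \<delta> w)"
    by (simp add: tsub_def fun_eq_iff)
  have a: "lo 1 (tsub s tone)" using s by (simp add: tsub_def tone_def)
  show ?thesis using pert_ev[OF k a dl n dc, of fL] by (simp add: tlog_ev e fps_ln_nth)
qed

lemma pert_tinv:
  assumes k: "1 \<le> k" and m: "m [] = 1" and dl: "lo n \<delta>" and n: "1 \<le> n" and dc: "tclean k \<delta>"
  shows "eqto n (tinv k (\<lambda>w. m w + \<delta> w)) (\<lambda>w. tinv k m w - \<delta> w)"
proof -
  have e: "tsub tone (\<lambda>w. m w + \<delta> w) = (\<lambda>w. tsub tone m w + (- \<delta> w))"
    by (simp add: tsub_def fun_eq_iff)
  have a: "lo 1 (tsub tone m)" using m by (simp add: tsub_def tone_def)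
  have dl': "lo n (\<lambda>w. - \<delta> w)" using dl by (simp add: lo_def)
  have dc': "tclean k (\<lambda>w. - \<delta> w)" using dc by (simp add: tclean_def)
  show ?thesis using pert_ev[OF k a dl' n dc', of fG] by (simp add: tinv_ev e)
qed

lemma tmul_lo_left:
  assumes dl: "lo n \<delta>" and dc: "tclean k \<delta>" and x: "x [] = 1"
  shows "eqto n (tmul k \<delta> x) \<delta>"
  unfolding eqto_def
proof (intro allI impI)
  fix w :: "nat list" assume w: "length w \<le> n"
  show "tmul k \<delta> x w = \<delta> w"
  proof (cases "length w \<le> k")
    case True
    have "tmul k \<delta> x w = (\<Sum>i\<le>length w. if i = length w then \<delta> w else 0)"
      unfolding tmul_le[OF True]
    proof (rule sum.cong[OF refl])
      fix i assume i: "i \<in> {..length w}"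
      show "\<delta> (take i w) * x (drop i w) = (if i = length w then \<delta> w else 0)"
      proof (cases "i = length w")
        case True then show ?thesis using x by simp
      next
        case False
        then have "length (take i w) < n" using i w by auto
        then show ?thesis using dl False by (simp add: lo_def)
      qed
    qed
    then show ?thesis by simp
  next
    case False then show ?thesis using dc by (simp add: tmul_def tclean_def)
  qed
qed

definition Fm :: "nat \<Rightarrow> nat \<Rightarrow> (nat \<Rightarrow> tensor) \<Rightarrow> tensor \<Rightarrow> tensor" where
  "Fm k N xs m = (\<lambda>w. \<Sum>i<N. tlog k (tmul k (tinv k m) (xs i)) w)"

lemma pert_F:
  assumes k: "1 \<le> k" and mu: "lo 1 \<mu>" and dl: "lo n \<delta>" and n: "1 \<le> n" and dc: "tclean k \<delta>"
    and xs: "\<And>i. i < N \<Longrightarrow> xs i [] = 1"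
  shows "eqto n (Fm k N xs (texp k (\<lambda>w. \<mu> w + \<delta> w))) (\<lambda>w. Fm k N xs (texp k \<mu>) w - real N * \<delta> w)"
proof -
  define m where "m = texp k \<mu>"
  have m0: "m [] = 1" using texp_nil[OF mu] by (simp add: m_def)
  have mc: "tclean k m" by (simp add: m_def texp_ev)
  have dl': "lo n (\<lambda>w. - \<delta> w)" using dl by (simp add: lo_def)
  have dc': "tclean k (\<lambda>w. - \<delta> w)" using dc by (simp add: tclean_def)
  have one: "eqto n (tlog k (tmul k (tinv k (texp k (\<lambda>w. \<mu> w + \<delta> w))) (xs i)))
        (\<lambda>w. tlog k (tmul k (tinv k m) (xs i)) w - \<delta> w)" if i: "i < N" for i
  proof -
    have "eqto n (tinv k (texp k (\<lambda>w. \<mu> w + \<delta> w))) (tinv k (\<lambda>w. m w + \<delta> w))"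
      by (rule eqto_tinv) (use pert_texp[OF k mu dl n dc] in \<open>simp add: m_def\<close>)
    also have "eqto n \<dots> (\<lambda>w. tinv k m w - \<delta> w)" by (rule pert_tinv[where m=m and \<delta>=\<delta>, OF k m0 dl n dc])
    finally have e1: "eqto n (tinv k (texp k (\<lambda>w. \<mu> w + \<delta> w))) (\<lambda>w. tinv k m w - \<delta> w)" .
    have "eqto n (tmul k (tinv k (texp k (\<lambda>w. \<mu> w + \<delta> w))) (xs i)) (tmul k (\<lambda>w. tinv k m w - \<delta> w) (xs i))"
      by (rule eqto_tmul[OF e1 eqto_refl])
    also have "tmul k (\<lambda>w. tinv k m w - \<delta> w) (xs i) = (\<lambda>w. tmul k (tinv k m) (xs i) w - tmul k \<delta> (xs i) w)"
      by (simp add: tmul_diff_left)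
    also have "eqto n \<dots> (\<lambda>w. tmul k (tinv k m) (xs i) w + (- \<delta> w))"
      using tmul_lo_left[where \<delta>=\<delta> and x="xs i", OF dl dc xs[OF i]] by (simp add: eqto_def)
    finally have e2: "eqto n (tmul k (tinv k (texp k (\<lambda>w. \<mu> w + \<delta> w))) (xs i))
        (\<lambda>w. tmul k (tinv k m) (xs i) w + (- \<delta> w))" .
    have s0: "tmul k (tinv k m) (xs i) [] = 1"
    proof -
      have "tinv k m [] = 1"
      proof -
        have "tmul k (tinv k m) m [] = 1" using tinv_mul(1)[OF k m0 mc] by (simp add: tone_def)
        then show ?thesis using m0 by (simp add: tmul_def)
      qed
      then show ?thesis using xs[OF i] by (simp add: tmul_def)
    qed
    have "eqto n (tlog k (tmul k (tinv k (texp k (\<lambda>w. \<mu> w + \<delta> w))) (xs i)))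
        (tlog k (\<lambda>w. tmul k (tinv k m) (xs i) w + (- \<delta> w)))"
      by (rule eqto_tlog[OF e2])
    also have "eqto n \<dots> (\<lambda>w. tlog k (tmul k (tinv k m) (xs i)) w + (- \<delta> w))"
      by (rule pert_tlog[where s="tmul k (tinv k m) (xs i)" and \<delta>="\<lambda>w. - \<delta> w", OF k s0 dl' n dc'])
    finally show ?thesis by (simp add: eqto_def)
  qed
  have "eqto n (Fm k N xs (texp k (\<lambda>w. \<mu> w + \<delta> w)))
      (\<lambda>w. \<Sum>i<N. tlog k (tmul k (tinv k m) (xs i)) w - \<delta> w)"
    unfolding Fm_def by (rule eqto_sum) (use one in auto)
  then show ?thesis by (simp add: Fm_def m_def sum_subtractf)
qed


primrec itr :: "nat \<Rightarrow> nat \<Rightarrow> (nat \<Rightarrow> tensor) \<Rightarrow> nat \<Rightarrow> tensor" where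
  "itr k N xs 0 = tzero"
| "itr k N xs (Suc j) = (\<lambda>w. itr k N xs j w + (1 / real N) * Fm k N xs (texp k (itr k N xs j)) w)"

lemma Fm_lie:
  assumes k: "1 \<le> k" and xs: "\<And>i. i < N \<Longrightarrow> xs i \<in> grp d k" and m: "m \<in> grp d k"
  shows "Fm k N xs m \<in> lie_alg d k"
  unfolding Fm_def by (rule lie_sum) (auto intro: lie_rel[OF k m] xs)

lemma Fm_clean: "tclean k (Fm k N xs m)"
  by (simp add: Fm_def tclean_def tlog_ev ev_def tclean_tpow[unfolded tclean_def])

lemma itr_props:
  assumes k: "1 \<le> k" and N: "1 \<le> N" and xs: "\<And>i. i < N \<Longrightarrow> xs i \<in> grp d k"
  shows "itr k N xs j \<in> lie_alg d k \<and> eqto j (Fm k N xs (texp k (itr k N xs j))) tzero"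
proof (induct j)
  case 0
  have z: "tzero \<in> lie_alg d k" by (rule lie_alg.zero)
  have "Fm k N xs (texp k tzero) \<in> lie_alg d k" by (rule Fm_lie[OF k xs grp_texp[OF z]])
  then have "Fm k N xs (texp k tzero) [] = 0" using lie_lo1 by simp
  then show ?case using z by (simp add: eqto_def tzero_def)
next
  case (Suc j)
  define \<mu> where "\<mu> = itr k N xs j"
  define \<delta> where "\<delta> = (\<lambda>w. (1 / real N) * Fm k N xs (texp k \<mu>) w)"
  have mu: "\<mu> \<in> lie_alg d k" and e: "eqto j (Fm k N xs (texp k \<mu>)) tzero" using Suc by (simp_all add: \<mu>_def)
  have Fl: "Fm k N xs (texp k \<mu>) \<in> lie_alg d k" by (rule Fm_lie[OF k xs grp_texp[OF mu]])
  have dlie: "\<delta> \<in> lie_alg d k" unfolding \<delta>_def by (rule lie_scale[OF Fl])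
  have dl: "lo (Suc j) \<delta>" using e by (auto simp: lo_def eqto_def \<delta>_def tzero_def)
  have dc: "tclean k \<delta>" by (rule lie_clean[OF k dlie])
  have it: "itr k N xs (Suc j) = (\<lambda>w. \<mu> w + \<delta> w)" by (simp add: \<mu>_def \<delta>_def)
  have l1: "itr k N xs (Suc j) \<in> lie_alg d k"
    using lie_alg.add[OF mu dlie] it by (simp add: tadd_def)
  have xs0: "\<And>i. i < N \<Longrightarrow> xs i [] = 1" using xs grp_nil by blast
  have "eqto (Suc j) (Fm k N xs (texp k (\<lambda>w. \<mu> w + \<delta> w))) (\<lambda>w. Fm k N xs (texp k \<mu>) w - real N * \<delta> w)"
    by (rule pert_F[where \<mu>=\<mu> and \<delta>=\<delta> and xs=xs, OF k lie_lo1[OF mu] dl _ dc xs0]) simp_all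
  moreover have "(\<lambda>w. Fm k N xs (texp k \<mu>) w - real N * \<delta> w) = tzero"
    using N by (simp add: \<delta>_def tzero_def fun_eq_iff)
  ultimately show ?case using l1 it by simp
qed

definition mstar :: "nat \<Rightarrow> nat \<Rightarrow> (nat \<Rightarrow> tensor) \<Rightarrow> tensor" where
  "mstar k N xs = texp k (itr k N xs k)"

lemma mstar_ok:
  assumes k: "1 \<le> k" and N: "1 \<le> N" and xs: "\<And>i. i < N \<Longrightarrow> xs i \<in> grp d k"
  shows "mstar k N xs \<in> grp d k \<and> Fm k N xs (mstar k N xs) = tzero"
proof -
  have p: "itr k N xs k \<in> lie_alg d k" "eqto k (Fm k N xs (texp k (itr k N xs k))) tzero"
    using itr_props[OF k N xs] by auto
  have "Fm k N xs (texp k (itr k N xs k)) = tzero"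
  proof (rule ext)
    fix w show "Fm k N xs (texp k (itr k N xs k)) w = tzero w"
      using p(2) Fm_clean[of k N xs] by (cases "length w \<le> k") (auto simp: eqto_def tclean_def tzero_def)
  qed
  then show ?thesis using grp_texp[OF p(1)] by (simp add: mstar_def)
qed

lemma mstar_unique:
  assumes k: "1 \<le> k" and N: "1 \<le> N" and xs: "\<And>i. i < N \<Longrightarrow> xs i \<in> grp d k"
    and m: "m \<in> grp d k" and F: "Fm k N xs m = tzero"
  shows "m = mstar k N xs"
proof -
  define \<mu> where "\<mu> = itr k N xs k"
  have mu: "\<mu> \<in> lie_alg d k" using itr_props[OF k N xs] by (simp add: \<mu>_def)
  have F0: "Fm k N xs (texp k \<mu>) = tzero" using mstar_ok[OF k N xs] by (simp add: mstar_def \<mu>_def)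
  obtain \<nu> where nu: "\<nu> \<in> lie_alg d k" "m = texp k \<nu>" using m by (auto simp: grp_def)
  define \<delta> where "\<delta> = (\<lambda>w. \<nu> w - \<mu> w)"
  have dc: "tclean k \<delta>" using lie_clean[OF k mu] lie_clean[OF k nu(1)] by (simp add: \<delta>_def tclean_def)
  have nd: "\<nu> = (\<lambda>w. \<mu> w + \<delta> w)" by (simp add: \<delta>_def)
  have xs0: "\<And>i. i < N \<Longrightarrow> xs i [] = 1" using xs grp_nil by blast
  have lon: "lo (Suc n) \<delta>" for n
  proof (induct n)
    case 0 then show ?case using lie_lo1[OF mu] lie_lo1[OF nu(1)] by (simp add: \<delta>_def)
  next
    case (Suc n)
    have "eqto (Suc n) (Fm k N xs (texp k (\<lambda>w. \<mu> w + \<delta> w))) (\<lambda>w. Fm k N xs (texp k \<mu>) w - real N * \<delta> w)"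
      by (rule pert_F[where \<mu>=\<mu> and \<delta>=\<delta> and xs=xs, OF k lie_lo1[OF mu] Suc _ dc xs0]) simp_all
    then have "eqto (Suc n) tzero (\<lambda>w. 0 - real N * \<delta> w)"
      using F F0 nu(2) nd by (simp add: tzero_def)
    then show ?case using N Suc by (auto simp: eqto_def lo_def tzero_def less_Suc_eq_le)
  qed
  have "\<delta> = tzero"
  proof (rule ext)
    fix w show "\<delta> w = tzero w"
    proof (cases "length w \<le> k")
      case True then show ?thesis using lon[of k] by (simp add: lo_def tzero_def)
    next
      case False then show ?thesis using dc by (simp add: tclean_def tzero_def)
    qed
  qed
  then have "\<nu> = \<mu>" using nd by (simp add: tzero_def)
  then show ?thesis using nu by (simp add: mstar_def \<mu>_def)
qed

lemma the_mstar:
  assumes k: "1 \<le> k" and N: "1 \<le> N" and xs: "\<And>i. i < N \<Longrightarrow> xs i \<in> grp d k"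
  shows "(THE m. m \<in> grp d k \<and> Fm k N xs m = tzero) = mstar k N xs"
  by (rule the_equality) (use mstar_ok[OF k N xs] mstar_unique[OF k N xs] in auto)

lemma bary_eq:
  assumes k: "1 \<le> k" and N: "1 \<le> N" and x: "x \<in> samples d k N"
  shows "bary d k N x = mstar k N (sample_comp x)"
proof -
  have xs: "\<And>i. i < N \<Longrightarrow> sample_comp x i \<in> grp d k" using x by (simp add: samples_def)
  show ?thesis
    unfolding bary_def using the_mstar[OF k N xs] by (simp add: Fm_def)
qed


unbundle fps_syntax

lemma polyfun_sum: "finite S \<Longrightarrow> (\<And>i. i \<in> S \<Longrightarrow> f i \<in> polyfun) \<Longrightarrow> (\<lambda>x. \<Sum>i\<in>S. f i x) \<in> polyfun"
proof (induct S rule: finite_induct)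
  case empty then show ?case using polyfun.const[of 0] by simp
next
  case (insert a F)
  then show ?case using polyfun.add[of "f a" "\<lambda>x. \<Sum>i\<in>F. f i x"] by simp
qed

lemma polyfun_scale: "p \<in> polyfun \<Longrightarrow> (\<lambda>x. c * p x) \<in> polyfun"
  using polyfun.mult[OF polyfun.const[of c]] by blast

lemma polyfun_diff: "p \<in> polyfun \<Longrightarrow> q \<in> polyfun \<Longrightarrow> (\<lambda>x. p x - q x) \<in> polyfun"
  using polyfun.add[of p "\<lambda>x. (-1) * q x"] polyfun_scale[of q "-1"] by simp

definition polyT :: "(('v \<Rightarrow> real) \<Rightarrow> tensor) \<Rightarrow> bool" where
  "polyT F \<longleftrightarrow> (\<forall>w. (\<lambda>x. F x w) \<in> polyfun)"

lemma polyT_const: "polyT (\<lambda>x. c)"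
  by (simp add: polyT_def polyfun.const)

lemma polyT_add: "polyT F \<Longrightarrow> polyT G \<Longrightarrow> polyT (\<lambda>x w. F x w + G x w)"
  by (simp add: polyT_def polyfun.add)

lemma polyT_diff: "polyT F \<Longrightarrow> polyT G \<Longrightarrow> polyT (\<lambda>x w. F x w - G x w)"
  by (simp add: polyT_def polyfun_diff)

lemma polyT_scale: "polyT F \<Longrightarrow> polyT (\<lambda>x w. c * F x w)"
  by (simp add: polyT_def polyfun_scale)

lemma polyT_sum: "finite S \<Longrightarrow> (\<And>i. i \<in> S \<Longrightarrow> polyT (F i)) \<Longrightarrow> polyT (\<lambda>x w. \<Sum>i\<in>S. F i x w)"
  by (simp add: polyT_def polyfun_sum)

lemma polyT_tmul: "polyT F \<Longrightarrow> polyT G \<Longrightarrow> polyT (\<lambda>x. tmul k (F x) (G x))"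
  unfolding polyT_def
proof (intro allI)
  fix w assume F: "\<forall>w. (\<lambda>x. F x w) \<in> polyfun" and G: "\<forall>w. (\<lambda>x. G x w) \<in> polyfun"
  show "(\<lambda>x. tmul k (F x) (G x) w) \<in> polyfun"
  proof (cases "length w \<le> k")
    case True
    show ?thesis unfolding tmul_le[OF True]
      by (rule polyfun_sum) (auto intro: polyfun.mult F[rule_format] G[rule_format])
  next
    case False then show ?thesis by (simp add: tmul_def polyfun.const)
  qed
qed

lemma polyT_tpow: "polyT F \<Longrightarrow> polyT (\<lambda>x. tpow k (F x) n)"
  by (induct n) (simp_all add: polyT_const polyT_tmul)

lemma polyT_ev: "polyT F \<Longrightarrow> polyT (\<lambda>x. ev k (F x) f)"
  unfolding ev_def by (rule polyT_sum) (auto intro: polyT_scale polyT_tpow)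

lemma polyT_tsub: "polyT F \<Longrightarrow> polyT G \<Longrightarrow> polyT (\<lambda>x. tsub (F x) (G x))"
  unfolding tsub_def by (rule polyT_diff)

lemma polyT_texp: "polyT F \<Longrightarrow> polyT (\<lambda>x. texp k (F x))"
  by (simp add: texp_ev polyT_ev)

lemma polyT_tlog: "polyT F \<Longrightarrow> polyT (\<lambda>x. tlog k (F x))"
  by (simp add: tlog_ev polyT_ev polyT_tsub polyT_const)

lemma polyT_tinv: "polyT F \<Longrightarrow> polyT (\<lambda>x. tinv k (F x))"
  by (simp add: tinv_ev polyT_ev polyT_tsub polyT_const)

lemma polyT_Fm: "(\<And>i. polyT (\<lambda>x. xs x i)) \<Longrightarrow> polyT M \<Longrightarrow> polyT (\<lambda>x. Fm k N (xs x) (M x))"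
  unfolding Fm_def by (rule polyT_sum) (auto intro!: polyT_tlog polyT_tmul polyT_tinv)

lemma polyT_itr: "(\<And>i. polyT (\<lambda>x. xs x i)) \<Longrightarrow> polyT (\<lambda>x. itr k N (xs x) j)"
proof (induct j)
  case 0 then show ?case by (simp add: polyT_const)
next
  case (Suc j)
  have "polyT (\<lambda>x. Fm k N (xs x) (texp k (itr k N (xs x) j)))"
    by (rule polyT_Fm[OF Suc.prems polyT_texp[OF Suc.hyps[OF Suc.prems]]])
  then have "polyT (\<lambda>x w. (1 / real N) * Fm k N (xs x) (texp k (itr k N (xs x) j)) w)"
    by (rule polyT_scale)
  then show ?case using polyT_add[OF Suc.hyps[OF Suc.prems]] by simp
qed

lemma polyT_mstar: "(\<And>i. polyT (\<lambda>x. xs x i)) \<Longrightarrow> polyT (\<lambda>x. mstar k N (xs x))"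
  unfolding mstar_def by (rule polyT_texp) (rule polyT_itr)

lemma polyT_id: "polyT (\<lambda>x. x)"
  by (simp add: polyT_def polyfun.var)

lemma polyT_sample_comp: "polyT (\<lambda>x. sample_comp x i)"
  by (simp add: polyT_def sample_comp_def polyfun.var)

lemma polyT_morph: "polyT F \<Longrightarrow> \<forall>b. \<exists>p\<in>polyfun. \<forall>x\<in>V. F x b = p x"
  by (auto simp: polyT_def)


lemma tlog_tone: "tlog k tone = tzero"
proof -
  have z: "tsub tone tone = (\<lambda>w. 0)" by (simp add: tsub_def fun_eq_iff)
  have "tpow k (\<lambda>w. 0) l = (\<lambda>w. 0)" if "1 \<le> l" for l
    using that by (cases l) (simp_all add: tmul_zero_left)
  then show ?thesis by (simp add: tlog_def z tzero_def)
qed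

lemma Fm_split:
  assumes i0: "i0 < N"
  shows "Fm k N xs m = (\<lambda>w. tlog k (tmul k (tinv k m) (xs i0)) w +
          (\<Sum>i\<in>{..<N} - {i0}. tlog k (tmul k (tinv k m) (xs i)) w))"
  unfolding Fm_def using i0 by (simp add: sum.remove[of "{..<N}" i0])

theorem theorem4p7:
  fixes d k N :: nat
  assumes "1 \<le> d" and "1 \<le> k" and "1 \<le> N"
  shows "alg_morphism (samples d k N) (grp d k) (bary d k N)
         \<and> bary d k N ` samples d k N = grp d k
         \<and> (\<forall>i0<N. \<forall>x\<in>samples d k N.
               alg_iso (grp d k) (grp d k) (\<lambda>y. bary d k N (sample_upd x i0 y)))"
proof -
  have k: "1 \<le> k" and N: "1 \<le> N" using assms by auto
  have bx: "bary d k N x = mstar k N (sample_comp x) \<and> mstar k N (sample_comp x) \<in> grp d k"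
    if x: "x \<in> samples d k N" for x
  proof -
    have xs: "\<And>i. i < N \<Longrightarrow> sample_comp x i \<in> grp d k" using x by (simp add: samples_def)
    show ?thesis using bary_eq[OF k N x] mstar_ok[OF k N xs] by simp
  qed
  have P1: "alg_morphism (samples d k N) (grp d k) (bary d k N)"
    unfolding alg_morphism_def
  proof (intro conjI)
    show "\<forall>x\<in>samples d k N. bary d k N x \<in> grp d k" using bx by simp
    have "polyT (\<lambda>x. mstar k N (sample_comp x))"
      by (rule polyT_mstar) (rule polyT_sample_comp)
    then have "\<forall>b. \<exists>p\<in>polyfun. \<forall>x\<in>samples d k N. mstar k N (sample_comp x) b = p x"
      by (rule polyT_morph)
    then show "\<forall>b. \<exists>p\<in>polyfun. \<forall>x\<in>samples d k N. bary d k N x b = p x"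
      using bx by simp
  qed
  have P2: "bary d k N ` samples d k N = grp d k"
  proof
    show "bary d k N ` samples d k N \<subseteq> grp d k" using bx by auto
    show "grp d k \<subseteq> bary d k N ` samples d k N"
    proof
      fix m assume m: "m \<in> grp d k"
      define x where "x = (\<lambda>(i, w). if i < N then m w else (0::real))"
      have sc: "sample_comp x i = m" if "i < N" for i
        using that by (simp add: x_def sample_comp_def fun_eq_iff)
      have x: "x \<in> samples d k N"
        using m sc by (auto simp: samples_def x_def)
      have xs: "\<And>i. i < N \<Longrightarrow> sample_comp x i \<in> grp d k" using sc m by simp
      have "Fm k N (sample_comp x) m = tzero"
        using tinv_mul(1)[OF k grp_nil[OF m] grp_clean[OF m]] sc
        by (simp add: Fm_def tlog_tone tzero_def)
      then have "m = mstar k N (sample_comp x)" using mstar_unique[OF k N xs m] by simp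
      then have "bary d k N x = m" using bx[OF x] by simp
      then show "m \<in> bary d k N ` samples d k N" using x by force
    qed
  qed
  have P3: "alg_iso (grp d k) (grp d k) (\<lambda>y. bary d k N (sample_upd x i0 y))"
    if i0: "i0 < N" and x: "x \<in> samples d k N" for i0 x
  proof -
    define xsU where "xsU y = (\<lambda>i. if i = i0 then y else sample_comp x i)" for y
    have xgrp: "\<And>i. i < N \<Longrightarrow> sample_comp x i \<in> grp d k" using x by (simp add: samples_def)
    have scu: "sample_comp (sample_upd x i0 y) = xsU y" for y
      by (auto simp: sample_comp_def sample_upd_def xsU_def fun_eq_iff)
    have xsU: "\<And>i. i < N \<Longrightarrow> xsU y i \<in> grp d k" if y: "y \<in> grp d k" for y
      using y xgrp by (simp add: xsU_def)
    have su: "sample_upd x i0 y \<in> samples d k N" if y: "y \<in> grp d k" for y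
      unfolding samples_def
    proof (intro CollectI conjI allI impI)
      fix i assume "i < N" then show "sample_comp (sample_upd x i0 y) i \<in> grp d k"
        using xsU[OF y] by (simp add: scu)
    next
      fix i w assume "N \<le> i" then show "sample_upd x i0 y (i, w) = 0"
        using x i0 by (simp add: sample_upd_def samples_def)
    qed
    have fe: "bary d k N (sample_upd x i0 y) = mstar k N (xsU y)" if y: "y \<in> grp d k" for y
      using bary_eq[OF k N su[OF y]] by (simp add: scu)
    define S where "S m = (\<lambda>w. \<Sum>i\<in>{..<N} - {i0}. tlog k (tmul k (tinv k m) (sample_comp x i)) w)" for m
    define g where "g m = tmul k m (texp k (tscale (-1) (S m)))" for m
    have FmU: "Fm k N (xsU y) m = (\<lambda>w. tlog k (tmul k (tinv k m) y) w + S m w)" for y m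
      unfolding Fm_split[OF i0] S_def by (simp add: xsU_def)
    have Slie: "S m \<in> lie_alg d k" if m: "m \<in> grp d k" for m
      unfolding S_def by (rule lie_sum) (auto intro: lie_rel[OF k m] xgrp)
    have ggrp: "g m \<in> grp d k" if m: "m \<in> grp d k" for m
      unfolding g_def by (rule grp_mul[OF k m grp_texp[OF lie_neg[OF Slie[OF m]]]])
    have polyU: "polyT (\<lambda>y. xsU y i)" for i
      by (cases "i = i0") (simp_all add: xsU_def polyT_id polyT_const)
    have polyg: "polyT g"
    proof -
      have "polyT S" unfolding S_def
        by (rule polyT_sum) (auto intro!: polyT_tlog polyT_tmul polyT_tinv polyT_id polyT_const)
      then have "polyT (\<lambda>m. tscale (-1) (S m))" unfolding tscale_def by (rule polyT_scale)
      then show ?thesis unfolding g_def by (intro polyT_tmul polyT_id polyT_texp)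
    qed
    have fg: "bary d k N (sample_upd x i0 (g m)) = m" if m: "m \<in> grp d k" for m
    proof -
      define E where "E = texp k (tscale (-1) (S m))"
      have nl: "tscale (-1) (S m) \<in> lie_alg d k" by (rule lie_neg[OF Slie[OF m]])
      have "tmul k (tinv k m) (g m) = E"
      proof -
        have "tmul k (tinv k m) (g m) = tmul k (tmul k (tinv k m) m) E"
          by (simp add: g_def E_def tmul_assoc)
        also have "\<dots> = E"
          using tinv_mul(1)[OF k grp_nil[OF m] grp_clean[OF m]]
          by (simp add: tmul_tone_left E_def texp_ev)
        finally show ?thesis .
      qed
      moreover have "tlog k E = tscale (-1) (S m)"
        unfolding E_def by (rule tlog_texp[OF k lie_lo1[OF nl] lie_clean[OF k nl]])
      ultimately have "Fm k N (xsU (g m)) m = tzero"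
        by (simp add: FmU tscale_def tzero_def)
      then have "m = mstar k N (xsU (g m))"
        using mstar_unique[OF k N xsU[OF ggrp[OF m]] m] by simp
      then show ?thesis using fe[OF ggrp[OF m]] by simp
    qed
    have gf: "g (bary d k N (sample_upd x i0 y)) = y" if y: "y \<in> grp d k" for y
    proof -
      define m where "m = mstar k N (xsU y)"
      have mo: "m \<in> grp d k" "Fm k N (xsU y) m = tzero"
        using mstar_ok[OF k N xsU[OF y]] by (simp_all add: m_def)
      have r: "tmul k (tinv k m) y \<in> grp d k" by (rule grp_mul[OF k grp_inv[OF k mo(1)] y])
      have "tscale (-1) (S m) = tlog k (tmul k (tinv k m) y)"
      proof (rule ext)
        fix w
        have "tlog k (tmul k (tinv k m) y) w + S m w = 0"
          using fun_cong[OF mo(2), of w] unfolding FmU tzero_def by simp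
        then show "tscale (-1) (S m) w = tlog k (tmul k (tinv k m) y) w"
          by (simp add: tscale_def)
      qed
      then have "g m = tmul k m (tmul k (tinv k m) y)"
        by (simp add: g_def texp_tlog_grp[OF k r])
      also have "\<dots> = tmul k (tmul k m (tinv k m)) y" by (simp add: tmul_assoc)
      also have "\<dots> = y"
        using tinv_mul(2)[OF k grp_nil[OF mo(1)] grp_clean[OF mo(1)]] grp_clean[OF y]
        by (simp add: tmul_tone_left)
      finally show ?thesis using fe[OF y] by (simp add: m_def)
    qed
    show ?thesis
      unfolding alg_iso_def
    proof (intro conjI exI[of _ g])
      show "alg_morphism (grp d k) (grp d k) (\<lambda>y. bary d k N (sample_upd x i0 y))"
        unfolding alg_morphism_def
      proof (intro conjI)
        show "\<forall>y\<in>grp d k. bary d k N (sample_upd x i0 y) \<in> grp d k"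
          using fe mstar_ok[OF k N xsU] by simp
        have "\<forall>b. \<exists>p\<in>polyfun. \<forall>y\<in>grp d k. mstar k N (xsU y) b = p y"
          by (rule polyT_morph) (rule polyT_mstar[OF polyU])
        then show "\<forall>b. \<exists>p\<in>polyfun. \<forall>y\<in>grp d k. bary d k N (sample_upd x i0 y) b = p y"
          using fe by simp
      qed
      show "alg_morphism (grp d k) (grp d k) g"
        unfolding alg_morphism_def using ggrp polyT_morph[OF polyg] by blast
      show "\<forall>y\<in>grp d k. g (bary d k N (sample_upd x i0 y)) = y" using gf by blast
      show "\<forall>m\<in>grp d k. bary d k N (sample_upd x i0 (g m)) = m" using fg by blast
    qed
  qed
  show ?thesis using P1 P2 P3 by blast
qed


end
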